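(* Let $c>0$. There is a positive constant $C_1$ such that for all $f\in C_B[0,\infty)$, all $0<\beta<1$, all $n\in\mathbb{N}$ with $n>3c$ and all $x\ge0$, $$|\mathcal{D}_{n,c}^{*\beta}(f,x)-f(x)|\le C_1\,\omega_2\Big(f,\sqrt{\mu_{2,n,c}^{*\beta}(x)}\Big),$$ where $\mu_{2,n,c}^{*\beta}(x)=\mathcal{D}_{n,c}^{*\beta}((t-x)^2,x)=\frac{c}{n-3c}x^2+\frac{2-2\beta+\beta^2}{(n-3c)(1-\beta)^2}x$.
   Context: For $\beta\in[0,1)$, $y\ge 0$, $n\in\mathbb{N}$ and integers $v\ge0$ let $\omega_\beta(v,ny)=ny(ny+v\beta)^{v-1}\frac{e^{-(ny+v\beta)}}{v!}$. For $c>0$, integers $v\ge1$ and $t\ge0$ let $p_{n,v-1,c}(t)=c\,\frac{\Gamma(n/c+v-1)}{\Gamma(v)\Gamma(n/c)}\cdot\frac{(ct)^{v-1}}{(1+ct)^{n/c+v-1}}$. For $n>2c$ put $r_n(x)=\frac{(n-2c)(1-\beta)x}{n}$ and define $$\mathcal{D}_{n,c}^{*\beta}(f,x)=\frac{n-c}{c}\sum_{v=1}^{\infty}\omega_\beta(v,n r_n(x))\int_0^\infty p_{n,v-1,c}(t)f(t)\,dt+e^{-n r_n(x)}f(0),\quad x\ge0.$$ $C_B[0,\infty)$ is the space of bounded continuous functions on $[0,\infty)$, and $\omega_2(f,\delta)=\sup_{0<h\le\delta}\sup_{x\ge0}|f(x+2h)-2f(x+h)+f(x)|$. *)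

theory Defs
  imports "HOL-Analysis.Analysis"
begin

definition omega_beta :: "real \<Rightarrow> nat \<Rightarrow> real \<Rightarrow> real" where
  "omega_beta \<beta> v u = u * (u + real v * \<beta>) ^ (v - 1) * exp (- (u + real v * \<beta>)) / fact v"

text \<open>p_{n,k,c}(t) with k = v - 1\<close>
definition p_basis :: "nat \<Rightarrow> nat \<Rightarrow> real \<Rightarrow> real \<Rightarrow> real" where
  "p_basis n k c t = c * Gamma (real n / c + real k) / (Gamma (real k + 1) * Gamma (real n / c))
      * (c * t) ^ k / (1 + c * t) powr (real n / c + real k)"

definition r_n :: "nat \<Rightarrow> real \<Rightarrow> real \<Rightarrow> real \<Rightarrow> real" where
  "r_n n c \<beta> x = (real n - 2 * c) * (1 - \<beta>) * x / real n"

definition D_op :: "nat \<Rightarrow> real \<Rightarrow> real \<Rightarrow> (real \<Rightarrow> real) \<Rightarrow> real \<Rightarrow> real" where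
  "D_op n c \<beta> f x =
     (real n - c) / c *
       (\<Sum>v. omega_beta \<beta> (Suc v) (real n * r_n n c \<beta> x) *
              (LINT t:{0..}|lborel. p_basis n v c t * f t))
     + exp (- (real n * r_n n c \<beta> x)) * f 0"

text \<open>Second order modulus of smoothness; the empty supremum (delta <= 0) is taken as 0.\<close>
definition omega2 :: "(real \<Rightarrow> real) \<Rightarrow> real \<Rightarrow> real" where
  "omega2 f \<delta> = Sup (insert 0 {\<bar>f (x + 2 * h) - 2 * f (x + h) + f x\<bar> | h x. 0 < h \<and> h \<le> \<delta> \<and> 0 \<le> x})"

definition mu2 :: "nat \<Rightarrow> real \<Rightarrow> real \<Rightarrow> real \<Rightarrow> real" where
  "mu2 n c \<beta> x = c / (real n - 3 * c) * x ^ 2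
      + (2 - 2 * \<beta> + \<beta> ^ 2) / ((real n - 3 * c) * (1 - \<beta>) ^ 2) * x"

end

theory Submission
  imports Defs
begin


definition Pp :: "nat \<Rightarrow> real \<Rightarrow> real" where
  "Pp m w = w ^ m * exp (- w) / fact m"

lemma pow_fact_le_exp:
  fixes z :: real assumes "0 \<le> z" shows "z ^ m / fact m \<le> exp z"
proof -
  have c: "(\<lambda>n. z ^ n / fact n) sums exp z" using exp_converges[of z] by (simp add: divide_inverse mult.commute)
  hence s: "summable (\<lambda>n. z ^ n / fact n)" by (rule sums_summable)
  have "(\<Sum>n\<in>{m}. z ^ n / fact n) \<le> (\<Sum>n. z ^ n / fact n)"
    by (intro sum_le_suminf[OF s]) (use assms in auto)
  also have "\<dots> = exp z" using c by (rule sums_unique[symmetric])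
  finally show ?thesis by simp
qed

lemma Pp_nonneg: "0 \<le> w \<Longrightarrow> 0 \<le> Pp m w"
  by (simp add: Pp_def)

lemma alg1: fixes h b t :: real assumes "h * (1 - b) = 1"
  shows "h^2 * t + b * h^3 = (t + b) * h + b * (h^2 * (t+b) + b*h^3)"
proof -
  have z: "h - b * h - 1 = 0" using assms by (simp add: algebra_simps)
  have "h^2 * t + b * h^3 - ((t + b) * h + b * (h^2 * (t+b) + b*h^3)) = (t*h + b*h + b*h^2) * (h - b * h - 1)"
    by (simp add: algebra_simps power2_eq_square power3_eq_cube)
  thus ?thesis unfolding z by simp
qed

locale beta_ctx =
  fixes \<beta> :: real
  assumes b0: "0 < \<beta>" and b1: "\<beta> < 1"
begin

definition "eps = (1 - \<beta>) / 2"
definition "qq = exp (eps * \<beta>) / (1 + eps)"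

lemma eps_pos: "0 < eps" using b1 by (simp add: eps_def)

lemma exp_eb: "exp (eps * \<beta>) * (1 - eps * \<beta>) \<le> 1"
proof -
  have "1 - eps * \<beta> \<le> exp (- (eps * \<beta>))" using exp_ge_add_one_self[of "- (eps*\<beta>)"] by simp
  hence "exp (eps * \<beta>) * (1 - eps * \<beta>) \<le> exp (eps * \<beta>) * exp (- (eps * \<beta>))"
    by (intro mult_left_mono) auto
  thus ?thesis by (simp add: exp_minus)
qed

lemma epsb_lt: "eps * \<beta> < 1 - \<beta>"
proof -
  have "eps * \<beta> = (1 - \<beta>) * (\<beta> / 2)" by (simp add: eps_def)
  also have "\<dots> < (1 - \<beta>) * 1" using b0 b1 by (intro mult_strict_left_mono) auto
  finally show ?thesis by simp
qed

lemma qq_pos: "0 < qq" using eps_pos by (simp add: qq_def)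

lemma qq_lt1: "qq < 1"
proof -
  have h: "0 < 1 - eps * \<beta>" using epsb_lt b0 b1 by linarith
  have "exp (eps * \<beta>) \<le> 1 / (1 - eps * \<beta>)" using exp_eb h by (simp add: field_simps)
  also have "\<dots> < 1 + eps"
  proof -
    have "0 < eps * (1 - \<beta> - eps * \<beta>)" using epsb_lt eps_pos by (intro mult_pos_pos) auto
    hence "1 < (1 + eps) * (1 - eps * \<beta>)" by (simp add: algebra_simps)
    thus ?thesis using h by (simp add: field_simps)
  qed
  finally show ?thesis using eps_pos by (simp add: qq_def field_simps)
qed

lemma beta_exp_lt1: "\<beta> * exp (eps * \<beta>) < 1"
proof -
  have h: "0 < 1 - eps * \<beta>" using epsb_lt b0 b1 by linarith
  have "exp (eps * \<beta>) \<le> 1 / (1 - eps * \<beta>)" using exp_eb h by (simp add: field_simps)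
  hence "\<beta> * exp (eps * \<beta>) \<le> \<beta> * (1 / (1 - eps * \<beta>))" using b0 by (intro mult_left_mono) auto
  also have "\<dots> < 1" using h epsb_lt by (simp add: field_simps)
  finally show ?thesis .
qed

lemma Pp_bound:
  assumes "0 \<le> y"
  shows "Pp m (y + real m * \<beta>) \<le> exp (eps * y) * qq ^ m"
proof -
  define w where "w = y + real m * \<beta>"
  have w0: "0 \<le> w" using assms b0 by (simp add: w_def)
  have e1: "(w * (1 + eps)) ^ m / fact m \<le> exp (w * (1 + eps))"
    using w0 eps_pos by (intro pow_fact_le_exp) auto
  have "w ^ m * (1 + eps) ^ m \<le> exp (w * (1 + eps)) * fact m"
    using e1 by (simp add: power_mult_distrib divide_le_eq)
  hence "w ^ m \<le> exp (w * (1 + eps)) * fact m / (1 + eps) ^ m"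
    using eps_pos by (simp add: le_divide_eq)
  hence "w ^ m * exp (- w) / fact m \<le> exp (w * (1 + eps)) * fact m / (1 + eps) ^ m * exp (- w) / fact m"
    by (intro divide_right_mono mult_right_mono) auto
  also have "\<dots> = exp (w * (1 + eps)) * exp (- w) / (1 + eps) ^ m"
    by simp
  also have "exp (w * (1 + eps)) * exp (- w) = exp (w * (1 + eps) + - w)"
    by (rule mult_exp_exp)
  also have "w * (1 + eps) + - w = eps * y + real m * (eps * \<beta>)"
    by (simp add: w_def algebra_simps)
  also have "exp (eps * y + real m * (eps * \<beta>)) / (1 + eps) ^ m = exp (eps * y) * qq ^ m"
    by (simp add: qq_def exp_add exp_of_nat_mult power_divide)
  finally show ?thesis by (simp add: Pp_def w_def)
qed


definition "HH y = (\<Sum>m. Pp m (y + real m * \<beta>))"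

lemma geom_summ: "summable (\<lambda>m. C * qq ^ m)"
  using qq_pos qq_lt1 by (intro summable_mult summable_geometric) auto

lemma Pp_summ: assumes "0 \<le> y" shows "summable (\<lambda>m. Pp m (y + real m * \<beta>))"
proof (rule summable_comparison_test'[OF geom_summ[of "exp (eps * y)"]])
  fix m :: nat
  have "0 \<le> Pp m (y + real m * \<beta>)" using assms b0 by (intro Pp_nonneg) auto
  thus "norm (Pp m (y + real m * \<beta>)) \<le> exp (eps * y) * qq ^ m" using Pp_bound[OF assms] by simp
qed

lemma HH_nonneg: "0 \<le> y \<Longrightarrow> 0 \<le> HH y"
  unfolding HH_def using b0 by (intro suminf_nonneg Pp_summ Pp_nonneg) auto

lemma HH_bound: assumes "0 \<le> y" shows "HH y \<le> exp (eps * y) / (1 - qq)"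
proof -
  have "HH y \<le> (\<Sum>m. exp (eps * y) * qq ^ m)"
    unfolding HH_def using Pp_bound[OF assms] by (intro suminf_le Pp_summ assms geom_summ) auto
  also have "\<dots> = exp (eps * y) * (1 / (1 - qq))"
    using qq_pos qq_lt1 by (simp add: suminf_mult summable_geometric suminf_geometric)
  finally show ?thesis by simp
qed

definition "dterm m y = (if m = 0 then 0 else Pp (m - 1) (y + real m * \<beta>)) - Pp m (y + real m * \<beta>)"

lemma Pp_deriv_gen: "((\<lambda>y. Pp m (y + c)) has_field_derivative
   ((real m * (y + c) ^ (m - 1)) * exp (- (y + c)) - (y + c) ^ m * exp (- (y + c))) / fact m) (at y within S)"
  unfolding Pp_def
  by (rule derivative_eq_intros refl | simp)+

lemma Pp_deriv: "((\<lambda>y. Pp m (y + real m * \<beta>)) has_field_derivative dterm m y) (at y within S)"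
proof -
  have eq: "((real m * (y + real m * \<beta>) ^ (m - 1)) * exp (- (y + real m * \<beta>)) - (y + real m * \<beta>) ^ m * exp (- (y + real m * \<beta>))) / fact m
     = dterm m y"
  proof (cases m)
    case 0 thus ?thesis by (simp add: dterm_def Pp_def)
  next
    case (Suc k)
    define w where "w = y + real m * \<beta>"
    define E where "E = exp (- (y + real m * \<beta>))"
    have "real m * w ^ k * E / fact m = w ^ k * E / fact k"
      using Suc by (simp add: fact_Suc del: of_nat_Suc)
    thus ?thesis unfolding dterm_def Pp_def using Suc
      by (simp add: diff_divide_distrib w_def E_def del: of_nat_Suc)
  qed
  show ?thesis using Pp_deriv_gen[of m "real m * \<beta>" y S] unfolding eq .
qed

lemma dterm_bound: assumes "0 \<le> y" "y \<le> Y"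
  shows "\<bar>dterm m y\<bar> \<le> 2 * exp (eps * (Y + 1)) / qq * qq ^ m"
proof -
  have y0: "0 \<le> y + \<beta>" using assms b0 by auto
  have e1: "exp (eps * y) \<le> exp (eps * (Y + 1))" using assms eps_pos by auto
  have e2: "exp (eps * (y + \<beta>)) \<le> exp (eps * (Y + 1))" using assms eps_pos b1 by auto
  have a: "0 \<le> (if m = 0 then 0 else Pp (m - 1) (y + real m * \<beta>))" using assms b0 Pp_nonneg by auto
  have b: "0 \<le> Pp m (y + real m * \<beta>)" using assms b0 Pp_nonneg by auto
  have A: "(if m = 0 then 0 else Pp (m - 1) (y + real m * \<beta>)) \<le> exp (eps * (Y + 1)) / qq * qq ^ m"
  proof (cases m)
    case (Suc k)
    have "Pp k ((y + \<beta>) + real k * \<beta>) \<le> exp (eps * (y + \<beta>)) * qq ^ k" by (rule Pp_bound[OF y0])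
    also have "\<dots> \<le> exp (eps * (Y + 1)) * qq ^ k" using e2 qq_pos by (intro mult_right_mono) auto
    also have "\<dots> = exp (eps * (Y + 1)) / qq * qq ^ m" using qq_pos by (simp add: Suc)
    finally show ?thesis using Suc by (simp add: algebra_simps)
  qed (use qq_pos in auto)
  have B: "Pp m (y + real m * \<beta>) \<le> exp (eps * (Y + 1)) / qq * qq ^ m"
  proof -
    have "Pp m (y + real m * \<beta>) \<le> exp (eps * y) * qq ^ m" by (rule Pp_bound[OF assms(1)])
    also have "\<dots> \<le> exp (eps * (Y + 1)) * qq ^ m" using e1 qq_pos by (intro mult_right_mono) auto
    also have "\<dots> \<le> exp (eps * (Y + 1)) / qq * qq ^ m" using qq_pos qq_lt1
      by (intro mult_right_mono) (auto simp: field_simps)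
    finally show ?thesis .
  qed
  show ?thesis unfolding dterm_def using A B a b by linarith
qed

lemma dterm_sums: assumes "0 \<le> y" shows "(\<lambda>m. dterm m y) sums (HH (y + \<beta>) - HH y)"
proof -
  define e where "e m = (if m = 0 then 0 else Pp (m - 1) (y + real m * \<beta>))" for m
  have "(\<lambda>k. e (Suc k)) sums HH (y + \<beta>)"
  proof -
    have "(\<lambda>k. Pp k ((y + \<beta>) + real k * \<beta>)) sums HH (y + \<beta>)"
      unfolding HH_def using assms b0 by (intro summable_sums Pp_summ) auto
    thus ?thesis by (simp add: e_def algebra_simps)
  qed
  hence "e sums HH (y + \<beta>)" by (subst (asm) sums_Suc_iff) (simp add: e_def)
  moreover have "(\<lambda>m. Pp m (y + real m * \<beta>)) sums HH y"
    unfolding HH_def using assms by (intro summable_sums Pp_summ)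
  ultimately have "(\<lambda>m. e m - Pp m (y + real m * \<beta>)) sums (HH (y + \<beta>) - HH y)"
    by (rule sums_diff)
  thus ?thesis by (simp add: dterm_def e_def)
qed

lemma HH_deriv: assumes "0 \<le> y" "y \<le> Y"
  shows "(HH has_field_derivative (HH (y + \<beta>) - HH y)) (at y within {0..Y})"
proof -
  have ul: "uniform_limit {0..Y} (\<lambda>n x. \<Sum>i<n. dterm i x) (\<lambda>x. \<Sum>i. dterm i x) sequentially"
    by (rule Weierstrass_m_test[OF _ geom_summ[of "2 * exp (eps * (Y + 1)) / qq"]])
       (use dterm_bound in auto)
  obtain g where g: "\<forall>x\<in>{0..Y}. (\<lambda>n. Pp n (x + real n * \<beta>)) sums g x \<and>
     (g has_field_derivative (\<Sum>i. dterm i x)) (at x within {0..Y})"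
    using has_field_derivative_series[OF convex_real_interval(5) Pp_deriv ul, of 0] assms Pp_summ[of 0]
    by auto
  have gH: "g x = HH x" if "x \<in> {0..Y}" for x
    using g that unfolding HH_def by (metis sums_unique)
  have "y \<in> {0..Y}" using assms by auto
  hence "(g has_field_derivative (\<Sum>i. dterm i y)) (at y within {0..Y})" using g by auto
  hence "(HH has_field_derivative (\<Sum>i. dterm i y)) (at y within {0..Y})"
    by (rule has_field_derivative_transform_within[where d=1]) (use assms gH in auto)
  thus ?thesis using dterm_sums[OF assms(1)] sums_unique by metis
qed

lemma HH_cont: "continuous_on {0..Y} HH"
  unfolding continuous_on_eq_continuous_within
  using HH_deriv DERIV_continuous by fastforce

definition "II z = integral {0..z} HH"

lemma II_deriv_at: assumes "0 < z" shows "DERIV II z :> HH z"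
proof -
  have "(II has_real_derivative HH z) (at z within {0..z+1})"
    unfolding II_def using assms by (intro integral_has_real_derivative HH_cont) auto
  moreover have "at z within {0..z+1} = at z" using assms by (intro at_within_Icc_at) auto
  ultimately show ?thesis by simp
qed

lemma II_deriv_within: assumes "0 \<le> z" "z \<le> Y" shows "(II has_real_derivative HH z) (at z within {0..Y})"
  unfolding II_def using assms by (intro integral_has_real_derivative HH_cont) auto

definition "Phi y = HH y - (II (y + \<beta>) - II y)"

lemma Phi_deriv: assumes "0 \<le> y" "y \<le> Y" shows "(Phi has_real_derivative 0) (at y within {0..Y})"
proof -
  have d1: "((\<lambda>y. II (y + \<beta>)) has_real_derivative HH (y + \<beta>) * 1) (at y within {0..Y})"
    by (rule DERIV_chain'[where g=II]) (auto intro!: derivative_eq_intros II_deriv_at simp: assms b0 add_nonneg_pos)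
  have "(Phi has_real_derivative ((HH (y + \<beta>) - HH y) - (HH (y + \<beta>) * 1 - HH y))) (at y within {0..Y})"
    unfolding Phi_def[abs_def]
    by (intro DERIV_diff HH_deriv assms d1 II_deriv_within)
  thus ?thesis by simp
qed

lemma Phi_const: "0 \<le> y \<Longrightarrow> Phi y = Phi 0"
proof -
  assume y: "0 \<le> y"
  obtain c where c: "\<forall>x\<in>{0..y}. Phi x = c"
    using has_field_derivative_zero_constant[of "{0..y}" Phi] Phi_deriv by force
  thus ?thesis using y by auto
qed

definition "hh = Phi 0 / (1 - \<beta>)"

lemma HH_int: assumes "0 \<le> y" shows "(HH has_integral (II (y + \<beta>) - II y)) {y..y+\<beta>}"
proof (rule fundamental_theorem_of_calculus)
  show "y \<le> y + \<beta>" using b0 by simp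
  fix t assume t: "t \<in> {y..y+\<beta>}"
  have "(II has_real_derivative HH t) (at t within {0..y+\<beta>})"
    using t assms by (intro II_deriv_within) auto
  hence "(II has_real_derivative HH t) (at t within {y..y+\<beta>})"
    by (rule DERIV_subset) (use assms in auto)
  thus "(II has_vector_derivative HH t) (at t within {y..y+\<beta>})"
    by (simp add: has_real_derivative_iff_has_vector_derivative)
qed

definition "GG y = HH y - hh"

lemma GG_int: assumes "0 \<le> y" shows "(GG has_integral GG y) {y..y+\<beta>}"
proof -
  have m: "measure lborel {y..y+\<beta>} = \<beta>" using b0 by simp
  have c: "((\<lambda>t. hh) has_integral (\<beta> * hh)) {y..y+\<beta>}"
    using has_integral_const_real[of hh y "y+\<beta>"] unfolding m by simp
  have "((\<lambda>t. HH t - hh) has_integral ((II (y + \<beta>) - II y) - \<beta> * hh)) {y..y+\<beta>}"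
    by (intro has_integral_diff HH_int assms c)
  moreover have "(II (y + \<beta>) - II y) - \<beta> * hh = GG y"
  proof -
    have "Phi y = Phi 0" using Phi_const[OF assms] .
    hence "HH y - (II (y + \<beta>) - II y) = Phi 0" unfolding Phi_def by simp
    moreover have "Phi 0 = hh * (1 - \<beta>)" using b1 unfolding hh_def by simp
    ultimately show ?thesis unfolding GG_def by (simp add: algebra_simps)
  qed
  ultimately show ?thesis unfolding GG_def[abs_def] by simp
qed

definition "CG = 1 / (1 - qq) + \<bar>hh\<bar>"

lemma GG_growth: assumes "0 \<le> t" shows "\<bar>GG t\<bar> * exp (- (eps * t)) \<le> CG"
proof -
  have e1: "1 \<le> exp (eps * t)" using assms eps_pos by simp
  have "\<bar>GG t\<bar> \<le> HH t + \<bar>hh\<bar>" using HH_nonneg[OF assms] by (simp add: GG_def)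
  also have "\<dots> \<le> exp (eps * t) / (1 - qq) + \<bar>hh\<bar> * exp (eps * t)"
    using HH_bound[OF assms] mult_left_mono[OF e1, of "\<bar>hh\<bar>"] by (intro add_mono) auto
  also have "\<dots> = CG * exp (eps * t)" by (simp add: CG_def field_simps)
  finally show ?thesis by (simp add: exp_minus field_simps)
qed

lemma GG_zero: assumes "0 \<le> y" shows "GG y = 0"
proof -
  define A where "A = {\<bar>GG t\<bar> * exp (- (eps * t)) | t. 0 \<le> t}"
  define S where "S = Sup A"
  have Ane: "A \<noteq> {}" unfolding A_def by auto
  have Abdd: "bdd_above A" unfolding A_def using GG_growth by (auto intro!: bdd_aboveI)
  have inA: "\<bar>GG t\<bar> * exp (- (eps * t)) \<le> S" if "0 \<le> t" for t
    unfolding S_def using that Abdd by (intro cSup_upper) (auto simp: A_def)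
  have S0: "0 \<le> S" using inA[of 0] by simp
  have key: "\<bar>GG t\<bar> * exp (- (eps * t)) \<le> \<beta> * exp (eps * \<beta>) * S" if t: "0 \<le> t" for t
  proof -
    have bnd: "norm (GG u) \<le> S * exp (eps * (t + \<beta>))" if "u \<in> cbox t (t + \<beta>)" for u
    proof -
      have u: "t \<le> u" "u \<le> t + \<beta>" using that by auto
      have "\<bar>GG u\<bar> * exp (- (eps * u)) \<le> S" using inA u t by auto
      hence "\<bar>GG u\<bar> \<le> S * exp (eps * u)" by (simp add: exp_minus field_simps)
      also have "\<dots> \<le> S * exp (eps * (t + \<beta>))" using S0 u eps_pos
        by (intro mult_left_mono) (auto intro: mult_left_mono)
      finally show ?thesis by simp
    qed
    have "norm (GG t) \<le> S * exp (eps * (t + \<beta>)) * measure lborel (cbox t (t + \<beta>))"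
      by (rule has_integral_bound[OF _ _ bnd]) (use GG_int[OF t] S0 in auto)
    hence "\<bar>GG t\<bar> \<le> S * exp (eps * (t + \<beta>)) * \<beta>" using b0 by simp
    hence "\<bar>GG t\<bar> * exp (- (eps * t)) \<le> S * exp (eps * (t + \<beta>)) * \<beta> * exp (- (eps * t))"
      by (intro mult_right_mono) auto
    also have "\<dots> = \<beta> * exp (eps * \<beta>) * S"
      by (simp add: algebra_simps mult_exp_exp)
    finally show ?thesis .
  qed
  have "S \<le> \<beta> * exp (eps * \<beta>) * S"
    unfolding S_def by (rule cSup_least[OF Ane]) (use key in \<open>auto simp: A_def S_def\<close>)
  hence "S \<le> 0" using beta_exp_lt1 S0
    by (metis mult_le_cancel_right1 not_le)
  hence "\<bar>GG y\<bar> * exp (- (eps * y)) \<le> 0" using inA[OF assms] by simp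
  thus ?thesis by (simp add: mult_le_0_iff)
qed

lemma HH_const: "0 \<le> y \<Longrightarrow> HH y = hh"
  using GG_zero by (simp add: GG_def)

lemma HH0: "HH 0 = 1 + \<beta> * HH \<beta>"
proof -
  have "(\<lambda>k. Pp k (\<beta> + real k * \<beta>)) sums HH \<beta>"
    unfolding HH_def using b0 by (intro summable_sums Pp_summ) auto
  hence "(\<lambda>k. \<beta> * Pp k (\<beta> + real k * \<beta>)) sums (\<beta> * HH \<beta>)" by (rule sums_mult)
  moreover have "\<beta> * Pp k (\<beta> + real k * \<beta>) = Pp (Suc k) (0 + real (Suc k) * \<beta>)" for k
  proof -
    have "\<beta> * (\<beta> + real k * \<beta>) ^ k * exp (- (\<beta> + real k * \<beta>)) / fact k
        = (\<beta> + real k * \<beta>) ^ Suc k * exp (- (\<beta> + real k * \<beta>)) / fact (Suc k)"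
      by (simp add: fact_Suc field_simps del: of_nat_Suc) (simp add: algebra_simps)
    thus ?thesis unfolding Pp_def by (simp add: algebra_simps)
  qed
  ultimately have "(\<lambda>k. Pp (Suc k) (0 + real (Suc k) * \<beta>)) sums (\<beta> * HH \<beta>)" by simp
  hence "(\<lambda>m. Pp m (0 + real m * \<beta>)) sums (\<beta> * HH \<beta> + Pp 0 (0 + real 0 * \<beta>))"
    by (subst (asm) sums_Suc_iff)
  hence "(\<lambda>m. Pp m (0 + real m * \<beta>)) sums (\<beta> * HH \<beta> + 1)" by (simp add: Pp_def)
  thus ?thesis unfolding HH_def by (simp add: sums_iff)
qed

lemma hh_val: "hh = 1 / (1 - \<beta>)"
proof -
  have "hh = 1 + \<beta> * hh" using HH0 HH_const[of 0] HH_const[of \<beta>] b0 by simp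
  thus ?thesis using b1 by (simp add: field_simps)
qed


lemma geom1_summ: "summable (\<lambda>m. C * (real (Suc m) * qq ^ m))"
proof -
  have "summable (\<lambda>n. diffs (\<lambda>_. 1::real) n * qq ^ n)"
    by (rule termdiff_converges[where K=1]) (use qq_pos qq_lt1 in \<open>auto simp: summable_geometric\<close>)
  hence "summable (\<lambda>m. real (Suc m) * qq ^ m)" by (simp add: diffs_def)
  thus ?thesis by (rule summable_mult)
qed

lemma Pp1_summ: assumes "0 \<le> y" shows "summable (\<lambda>m. real m * Pp m (y + real m * \<beta>))"
proof (rule summable_comparison_test'[OF geom1_summ[of "exp (eps * y)"]])
  fix m :: nat
  have "0 \<le> Pp m (y + real m * \<beta>)" using assms b0 by (intro Pp_nonneg) auto
  moreover have "real m * Pp m (y + real m * \<beta>) \<le> real (Suc m) * (exp (eps * y) * qq ^ m)"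
    using Pp_bound[OF assms, of m] \<open>0 \<le> Pp m _\<close> qq_pos
    by (intro mult_mono) auto
  ultimately show "norm (real m * Pp m (y + real m * \<beta>)) \<le> exp (eps * y) * (real (Suc m) * qq ^ m)"
    by (simp add: mult_ac)
qed

definition "HH1 y = (\<Sum>m. real m * Pp m (y + real m * \<beta>))"

lemma HH1_bound: assumes "0 \<le> y" shows "\<bar>HH1 y\<bar> \<le> exp (eps * y) * (\<Sum>m. real (Suc m) * qq ^ m)"
proof -
  have nn: "0 \<le> HH1 y" unfolding HH1_def using assms b0 Pp_nonneg
    by (intro suminf_nonneg Pp1_summ) auto
  have "HH1 y \<le> (\<Sum>m. exp (eps * y) * (real (Suc m) * qq ^ m))"
    unfolding HH1_def
  proof (intro suminf_le Pp1_summ assms geom1_summ)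
    fix m :: nat
    have "0 \<le> Pp m (y + real m * \<beta>)" using assms b0 by (intro Pp_nonneg) auto
    thus "real m * Pp m (y + real m * \<beta>) \<le> exp (eps * y) * (real (Suc m) * qq ^ m)"
      using Pp_bound[OF assms, of m] qq_pos by (simp add: mult_ac) (intro mult_mono, auto)
  qed
  also have "\<dots> = exp (eps * y) * (\<Sum>m. real (Suc m) * qq ^ m)"
    using geom1_summ[of 1] by (intro suminf_mult) simp
  finally show ?thesis using nn by simp
qed

lemma HH1_rec: assumes "0 \<le> y" shows "HH1 y = (y + \<beta>) * hh + \<beta> * HH1 (y + \<beta>)"
proof -
  have y1: "0 \<le> y + \<beta>" using assms b0 by simp
  have eq: "real (Suc k) * Pp (Suc k) (y + real (Suc k) * \<beta>) =
      (y + \<beta>) * Pp k ((y + \<beta>) + real k * \<beta>) + \<beta> * (real k * Pp k ((y + \<beta>) + real k * \<beta>))" for k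
  proof -
    define w where "w = y + real (Suc k) * \<beta>"
    have w: "(y + \<beta>) + real k * \<beta> = w" by (simp add: w_def algebra_simps)
    have "real (Suc k) * Pp (Suc k) w = w * Pp k w"
      unfolding Pp_def by (simp add: fact_Suc field_simps del: of_nat_Suc)
    also have "\<dots> = (y + \<beta>) * Pp k w + \<beta> * (real k * Pp k w)" by (simp add: w_def algebra_simps)
    finally show ?thesis unfolding w by (simp add: w_def)
  qed
  have s1: "(\<lambda>k. Pp k ((y + \<beta>) + real k * \<beta>)) sums hh"
    using HH_const[OF y1] Pp_summ[OF y1] unfolding HH_def by (metis summable_sums)
  have s2: "(\<lambda>k. real k * Pp k ((y + \<beta>) + real k * \<beta>)) sums HH1 (y + \<beta>)"
    using Pp1_summ[OF y1] unfolding HH1_def by (rule summable_sums)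
  have "(\<lambda>k. (y + \<beta>) * Pp k ((y + \<beta>) + real k * \<beta>) + \<beta> * (real k * Pp k ((y + \<beta>) + real k * \<beta>)))
      sums ((y + \<beta>) * hh + \<beta> * HH1 (y + \<beta>))"
    by (intro sums_add sums_mult s1 s2)
  hence "(\<lambda>k. real (Suc k) * Pp (Suc k) (y + real (Suc k) * \<beta>)) sums ((y + \<beta>) * hh + \<beta> * HH1 (y + \<beta>))"
    unfolding eq .
  hence "(\<lambda>m. real m * Pp m (y + real m * \<beta>)) sums ((y + \<beta>) * hh + \<beta> * HH1 (y + \<beta>) + 0)"
    by (subst (asm) sums_Suc_iff) simp
  thus ?thesis unfolding HH1_def by (simp add: sums_iff)
qed

lemma pow_bound_zero:
  fixes x r C :: real
  assumes "0 \<le> r" "r < 1" "\<And>k. \<bar>x\<bar> \<le> C * r ^ k" shows "x = 0"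
proof -
  have "(\<lambda>k. C * r ^ k) \<longlonglongrightarrow> C * 0"
    using assms by (intro tendsto_mult tendsto_const LIMSEQ_power_zero) auto
  hence "\<bar>x\<bar> \<le> 0" using assms(3) by (intro LIMSEQ_le_const[of "\<lambda>k. C * r ^ k"]) auto
  thus ?thesis by simp
qed

lemma HH1_val: assumes "0 \<le> y" shows "HH1 y = hh^2 * y + \<beta> * hh^3"
proof -
  define G where "G t = HH1 t - (hh^2 * t + \<beta> * hh^3)" for t
  define M where "M = (\<Sum>m. real (Suc m) * qq ^ m) + hh^2 / eps + \<beta> * hh^3"
  have nz: "1 - \<beta> \<noteq> 0" using b1 by simp
  have hh1: "hh * (1 - \<beta>) = 1" unfolding hh_val using nz by simp
  have Grec: "G t = \<beta> * G (t + \<beta>)" if "0 \<le> t" for t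
  proof -
    have a: "hh^2 * t + \<beta> * hh^3 = (t + \<beta>) * hh + \<beta> * (hh^2 * (t + \<beta>) + \<beta> * hh^3)"
      by (rule alg1[OF hh1])
    have r: "HH1 t = (t + \<beta>) * hh + \<beta> * HH1 (t + \<beta>)" by (rule HH1_rec[OF that])
    have "\<beta> * G (t + \<beta>) = \<beta> * HH1 (t + \<beta>) - \<beta> * (hh^2 * (t + \<beta>) + \<beta> * hh^3)"
      by (simp only: G_def right_diff_distrib)
    thus ?thesis using r a unfolding G_def by linarith
  qed
  have Gb: "\<bar>G t\<bar> \<le> M * exp (eps * t)" if "0 \<le> t" for t
  proof -
    have e1: "1 \<le> exp (eps * t)" using that eps_pos by simp
    have tb: "t \<le> exp (eps * t) / eps"
    proof -
      have "eps * t \<le> exp (eps * t)" using exp_ge_add_one_self[of "eps * t"] by linarith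
      thus ?thesis using eps_pos by (simp add: le_divide_eq mult.commute)
    qed
    have h0: "0 \<le> hh" unfolding hh_val using b1 by simp
    have "0 \<le> hh^2 * t + \<beta> * hh^3" using h0 that b0 by simp
    hence "\<bar>G t\<bar> \<le> \<bar>HH1 t\<bar> + hh^2 * t + \<beta> * hh^3" unfolding G_def by linarith
    also have "\<dots> \<le> exp (eps * t) * (\<Sum>m. real (Suc m) * qq ^ m) + hh^2 * (exp (eps * t) / eps) + \<beta> * hh^3 * exp (eps * t)"
    proof -
      have "\<beta> * hh^3 * 1 \<le> \<beta> * hh^3 * exp (eps * t)" using e1 h0 b0 by (intro mult_left_mono) auto
      thus ?thesis using HH1_bound[OF that] tb h0
        by (intro add_mono mult_left_mono) auto
    qed
    also have "\<dots> = M * exp (eps * t)" by (simp add: M_def field_simps)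
    finally show ?thesis .
  qed
  have ind: "\<forall>t\<ge>0. \<bar>G t\<bar> \<le> (M * exp (eps * t)) * (\<beta> * exp (eps * \<beta>)) ^ k" for k
  proof (induction k)
    case 0 thus ?case using Gb by simp
  next
    case (Suc k)
    show ?case
    proof (intro allI impI)
      fix t :: real assume t: "0 \<le> t"
      have "\<bar>G t\<bar> = \<beta> * \<bar>G (t + \<beta>)\<bar>" using Grec[OF t] b0 by (simp add: abs_mult)
      also have "\<dots> \<le> \<beta> * ((M * exp (eps * (t + \<beta>))) * (\<beta> * exp (eps * \<beta>)) ^ k)"
        using Suc.IH t b0 by (intro mult_left_mono) auto
      also have "\<dots> = (M * exp (eps * t)) * (\<beta> * exp (eps * \<beta>)) ^ Suc k"
        by (simp add: distrib_left exp_add algebra_simps)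
      finally show "\<bar>G t\<bar> \<le> (M * exp (eps * t)) * (\<beta> * exp (eps * \<beta>)) ^ Suc k" .
    qed
  qed
  have "G y = 0"
    by (rule pow_bound_zero[of "\<beta> * exp (eps * \<beta>)" _ "M * exp (eps * y)"])
       (use ind assms beta_exp_lt1 b0 in auto)
  thus ?thesis by (simp add: G_def)
qed


lemma Pp_Suc: "real (Suc v) * Pp (Suc v) w = w * Pp v w"
  unfolding Pp_def by (simp add: fact_Suc field_simps del: of_nat_Suc)

lemma om_eq1: "real (Suc v) * omega_beta \<beta> (Suc v) u = u * Pp v ((u + \<beta>) + real v * \<beta>)"
proof -
  have w: "(u + \<beta>) + real v * \<beta> = u + real (Suc v) * \<beta>" by (simp add: algebra_simps)
  show ?thesis unfolding w omega_beta_def Pp_def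
    by (simp add: fact_Suc field_simps del: of_nat_Suc)
qed

lemma om_eq0: "omega_beta \<beta> (Suc v) u = Pp (Suc v) (u + real (Suc v) * \<beta>) - \<beta> * Pp v ((u + \<beta>) + real v * \<beta>)"
proof -
  define w where "w = u + real (Suc v) * \<beta>"
  have w: "(u + \<beta>) + real v * \<beta> = w" by (simp add: w_def algebra_simps)
  have "real (Suc v) * (Pp (Suc v) w - \<beta> * Pp v w) = (w - real (Suc v) * \<beta>) * Pp v w"
    using Pp_Suc[of v w] by (simp add: algebra_simps)
  also have "\<dots> = u * Pp v w" by (simp add: w_def)
  also have "\<dots> = real (Suc v) * omega_beta \<beta> (Suc v) u" using om_eq1[of v u] unfolding w ..
  finally have "real (Suc v) * (Pp (Suc v) w - \<beta> * Pp v w) = real (Suc v) * omega_beta \<beta> (Suc v) u" .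
  hence "Pp (Suc v) w - \<beta> * Pp v w = omega_beta \<beta> (Suc v) u" by (simp del: of_nat_Suc)
  thus ?thesis unfolding w by (simp add: w_def)
qed

lemma W0: assumes "0 \<le> u" shows "(\<lambda>v. omega_beta \<beta> (Suc v) u) sums (1 - exp (- u))"
proof -
  have u1: "0 \<le> u + \<beta>" using assms b0 by simp
  have sA: "(\<lambda>m. Pp m (u + real m * \<beta>)) sums hh"
    using HH_const[OF assms] Pp_summ[OF assms] unfolding HH_def by (metis summable_sums)
  hence sA': "(\<lambda>v. Pp (Suc v) (u + real (Suc v) * \<beta>)) sums (hh - exp (- u))"
    using sums_Suc_iff[of "\<lambda>m. Pp m (u + real m * \<beta>)" "hh - exp (- u)"] by (simp add: Pp_def)
  have sB: "(\<lambda>v. Pp v ((u + \<beta>) + real v * \<beta>)) sums hh"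
    using HH_const[OF u1] Pp_summ[OF u1] unfolding HH_def by (metis summable_sums)
  have "(\<lambda>v. Pp (Suc v) (u + real (Suc v) * \<beta>) - \<beta> * Pp v ((u + \<beta>) + real v * \<beta>)) sums (hh - exp (- u) - \<beta> * hh)"
    by (intro sums_diff sA' sums_mult sB)
  moreover have "hh - exp (- u) - \<beta> * hh = 1 - exp (- u)"
  proof -
    have "hh * (1 - \<beta>) = 1" unfolding hh_val using b1 by simp
    thus ?thesis by (simp add: algebra_simps)
  qed
  ultimately show ?thesis unfolding om_eq0 by simp
qed

lemma W1: assumes "0 \<le> u" shows "(\<lambda>v. real (Suc v) * omega_beta \<beta> (Suc v) u) sums (u * hh)"
proof -
  have u1: "0 \<le> u + \<beta>" using assms b0 by simp
  have sB: "(\<lambda>v. Pp v ((u + \<beta>) + real v * \<beta>)) sums hh"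
    using HH_const[OF u1] Pp_summ[OF u1] unfolding HH_def by (metis summable_sums)
  show ?thesis unfolding om_eq1 by (intro sums_mult sB)
qed

lemma W2: assumes "0 \<le> u"
  shows "(\<lambda>v. (real (Suc v))^2 * omega_beta \<beta> (Suc v) u) sums (u * (hh + (hh^2 * (u + \<beta>) + \<beta> * hh^3)))"
proof -
  have u1: "0 \<le> u + \<beta>" using assms b0 by simp
  have sB: "(\<lambda>v. Pp v ((u + \<beta>) + real v * \<beta>)) sums hh"
    using HH_const[OF u1] Pp_summ[OF u1] unfolding HH_def by (metis summable_sums)
  have sC: "(\<lambda>v. real v * Pp v ((u + \<beta>) + real v * \<beta>)) sums (hh^2 * (u + \<beta>) + \<beta> * hh^3)"
    using HH1_val[OF u1] Pp1_summ[OF u1] unfolding HH1_def by (metis summable_sums)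
  have eq: "(real (Suc v))^2 * omega_beta \<beta> (Suc v) u
     = u * (Pp v ((u + \<beta>) + real v * \<beta>) + real v * Pp v ((u + \<beta>) + real v * \<beta>))" for v
  proof -
    have "(real (Suc v))^2 * omega_beta \<beta> (Suc v) u = real (Suc v) * (real (Suc v) * omega_beta \<beta> (Suc v) u)"
      by (simp add: power2_eq_square)
    also have "\<dots> = real (Suc v) * (u * Pp v ((u + \<beta>) + real v * \<beta>))" by (simp only: om_eq1)
    finally show ?thesis by (simp add: algebra_simps)
  qed
  show ?thesis unfolding eq by (intro sums_mult sums_add sB sC)
qed

end



lemma si_meas: "set_integrable M A (f :: _ \<Rightarrow> real) \<Longrightarrow> set_borel_measurable M A f"
  unfolding set_integrable_def set_borel_measurable_def by (rule borel_measurable_integrable)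

lemma lim_g_left1: "LIM x at_left (1::real). x / (1 - x) :> at_top"
proof -
  have "LIM x at_left (1::real). 1 - x :> at_right 0"
  proof -
    have "((\<lambda>x::real. 1 - x) \<longlongrightarrow> 0) (at_left 1)" by (intro tendsto_eq_intros) auto
    moreover have "eventually (\<lambda>x::real. 1 - x \<in> {0<..}) (at_left 1)"
      by (auto simp: eventually_at_left_field intro: exI[of _ 0])
    ultimately show ?thesis unfolding filterlim_at by (auto elim: eventually_mono)
  qed
  hence "LIM x at_left (1::real). inverse (1 - x) :> at_top"
    by (rule filterlim_compose[OF filterlim_inverse_at_top_right])
  moreover have "((\<lambda>x::real. x) \<longlongrightarrow> 1) (at_left 1)" by (intro tendsto_eq_intros) auto
  ultimately have "LIM x at_left (1::real). x * inverse (1 - x) :> at_top"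
    by (intro filterlim_tendsto_pos_mult_at_top) auto
  thus ?thesis by (simp add: divide_inverse)
qed

lemma beta_prime_eq:
  fixes b x :: real and j :: nat assumes x: "0 < x" "x < 1"
  shows "(x / (1 - x)) ^ j / (1 + x / (1 - x)) powr (real j + 1 + b) * (1 / (1 - x)^2)
       = x powr (real j + 1 - 1) * (1 - x) powr (b - 1)"
proof -
  have d: "0 < 1 - x" using x by simp
  have e1: "1 + x / (1 - x) = 1 / (1 - x)" using d by (simp add: field_simps)
  have e2: "(1 / (1 - x)) powr (real j + 1 + b) = 1 / (1 - x) powr (real j + 1 + b)"
    using d by (simp add: powr_divide)
  have e3: "(1 - x) ^ j * (1 - x)^2 = (1 - x) powr (real j + 2)"
    using d by (simp add: powr_add powr_realpow power_add[symmetric])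
  have e4: "(1 - x) powr (real j + 1 + b) / (1 - x) powr (real j + 2) = (1 - x) powr (b - 1)"
    using d by (simp add: powr_diff[symmetric])
  have "(x / (1 - x)) ^ j / (1 + x / (1 - x)) powr (real j + 1 + b) * (1 / (1 - x)^2)
      = x ^ j * ((1 - x) powr (real j + 1 + b) / ((1 - x) ^ j * (1 - x)^2))"
    unfolding e1 e2 using d by (simp add: power_divide)
  also have "\<dots> = x ^ j * (1 - x) powr (b - 1)" unfolding e3 e4 ..
  also have "x ^ j = x powr (real j + 1 - 1)" using x by (simp add: powr_realpow)
  finally show ?thesis .
qed

lemma beta_prime:
  fixes b :: real and j :: nat assumes b: "0 < b"
  shows "set_integrable lborel (einterval 0 \<infinity>) (\<lambda>u. u ^ j / (1 + u) powr (real j + 1 + b))"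
    and "(LBINT u=0..\<infinity>. u ^ j / (1 + u) powr (real j + 1 + b)) = Beta (real j + 1) b"
proof -
  define f where "f u = u ^ j / (1 + u) powr (real j + 1 + b)" for u :: real
  define g where "g x = x / (1 - x)" for x :: real
  define g' where "g' x = 1 / (1 - x)^2" for x :: real
  have ein: "einterval (ereal 0) (ereal 1) = {0<..<(1::real)}" by (auto simp: einterval_def)
  have intB: "set_integrable lborel {0<..<1} (\<lambda>x. x powr (real j + 1 - 1) * (1 - x) powr (b - 1))"
    by (rule set_integrable_subset[OF integrable_Beta[of "real j + 1" b]]) (use b in auto)
  have eqfg: "f (g x) * g' x = x powr (real j + 1 - 1) * (1 - x) powr (b - 1)" if "x \<in> {0<..<1}" for x
    unfolding f_def g_def g'_def by (rule beta_prime_eq) (use that in auto)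
  have fg: "set_integrable lborel (einterval (ereal 0) (ereal 1)) (\<lambda>x. f (g x) * g' x)"
  proof -
    have "set_integrable lborel {0<..<1} (\<lambda>x. f (g x) * g' x) =
      set_integrable lborel {0<..<1} (\<lambda>x. x powr (real j + 1 - 1) * (1 - x) powr (b - 1))"
      by (rule set_integrable_cong) (use eqfg in auto)
    thus ?thesis unfolding ein using intB by simp
  qed
  have h2: "DERIV g x :> g' x" if "ereal 0 < ereal x" "ereal x < ereal 1" for x
  proof -
    have x: "0 < x" "x < 1" using that by auto
    show ?thesis unfolding g_def g'_def using x
      by (auto intro!: derivative_eq_intros simp: field_simps power2_eq_square)
  qed
  have h3: "isCont f (g x)" if "ereal 0 < ereal x" "ereal x < ereal 1" for x
  proof -
    have x: "0 < x" "x < 1" using that by auto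
    have "0 < g x" using x by (simp add: g_def)
    thus ?thesis unfolding f_def by (intro continuous_intros) auto
  qed
  have h4: "isCont g' x" if "ereal 0 < ereal x" "ereal x < ereal 1" for x
    using that unfolding g'_def by (intro continuous_intros) auto
  have h5: "0 \<le> f (g x)" if "ereal 0 < ereal x" "ereal x < ereal 1" for x
    using that unfolding f_def g_def by auto
  have h6: "0 \<le> g' x" for x unfolding g'_def by simp
  have h7: "((ereal \<circ> g \<circ> real_of_ereal) \<longlongrightarrow> ereal 0) (at_right (ereal 0))"
  proof -
    have "(g \<longlongrightarrow> 0) (at_right 0)" unfolding g_def by (intro tendsto_eq_intros) auto
    thus ?thesis unfolding o_assoc[symmetric] by (simp add: ereal_tendsto_simps)
  qed
  have h8: "((ereal \<circ> g \<circ> real_of_ereal) \<longlongrightarrow> \<infinity>) (at_left (ereal 1))"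
  proof -
    have "LIM x at_left 1. g x :> at_top" unfolding g_def by (rule lim_g_left1)
    thus ?thesis unfolding o_assoc[symmetric] by (simp add: ereal_tendsto_simps at_left_ereal filterlim_filtermap)
         (use ereal_tendsto_simps2(2)[of g "at_left 1"] in \<open>simp add: comp_def\<close>)
  qed
  note S = interval_integral_substitution_nonneg[of "ereal 0" "ereal 1" g g' f "ereal 0" \<infinity>,
      OF _ h2 h3 h4 h5 h6 h7 h8 fg]
  show "set_integrable lborel (einterval 0 \<infinity>) (\<lambda>u. u ^ j / (1 + u) powr (real j + 1 + b))"
    using S(1) unfolding f_def[abs_def] by (simp add: zero_ereal_def)
  have "(LBINT x=ereal 0..ereal 1. f (g x) * g' x) = (LINT x:{0<..<1}|lborel. x powr (real j + 1 - 1) * (1 - x) powr (b - 1))"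
    unfolding interval_lebesgue_integral_def ein
    by (simp only: if_True ereal_less_eq(3) zero_le_one) (intro set_lebesgue_integral_cong, use eqfg in auto)
  also have "\<dots> = (LINT x:{0..1}|lborel. x powr (real j + 1 - 1) * (1 - x) powr (b - 1))"
  proof -
    have i1: "set_integrable lborel {0<..<1} (\<lambda>x. x powr real j * (1 - x) powr (b - 1))" using intB by simp
    have i2: "set_integrable lborel {0..1} (\<lambda>x. x powr real j * (1 - x) powr (b - 1))"
      using integrable_Beta[of "real j + 1" b] b by simp
    show ?thesis
      by (rule set_integral_cong_set) (auto intro!: AE_I[where N="{0,1}"] si_meas i1 i2 simp: emeasure_insert_ne)
  qed
  also have "\<dots> = integral {0..1} (\<lambda>x. x powr (real j + 1 - 1) * (1 - x) powr (b - 1))"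
    using integrable_Beta[of "real j + 1" b] b by (intro set_borel_integral_eq_integral) auto
  also have "\<dots> = Beta (real j + 1) b"
    using has_integral_Beta_real[of "real j + 1" b] b by (simp add: integral_unique)
  finally show "(LBINT u=0..\<infinity>. u ^ j / (1 + u) powr (real j + 1 + b)) = Beta (real j + 1) b"
    using S(2) unfolding f_def[abs_def] by (simp add: zero_ereal_def)
qed


lemma Gamma_plus1_pos: "0 < (z::real) \<Longrightarrow> Gamma (z + 1) = z * Gamma z"
  by (rule Gamma_plus1) (auto dest: nonpos_Ints_nonpos)

lemma beta_prime_hb:
  fixes b :: real and j :: nat assumes b: "0 < b"
  shows "has_bochner_integral lborel (\<lambda>u. indicator {0<..} u *\<^sub>R (u ^ j / (1 + u) powr (real j + 1 + b))) (Beta (real j + 1) b)"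
proof -
  have e: "einterval 0 \<infinity> = ({0<..} :: real set)" by (auto simp: einterval_def zero_ereal_def)
  have i: "set_integrable lborel {0<..} (\<lambda>u. u ^ j / (1 + u) powr (real j + 1 + b))"
    using beta_prime(1)[OF b, of j] unfolding e .
  have v: "(LINT u:{0<..}|lborel. u ^ j / (1 + u) powr (real j + 1 + b)) = Beta (real j + 1) b"
    using beta_prime(2)[OF b, of j] unfolding interval_lebesgue_integral_0_infty .
  show ?thesis using i v unfolding set_integrable_def set_lebesgue_integral_def
    by (simp add: has_bochner_integral_iff)
qed

lemma pb_moment:
  fixes c :: real and n k i :: nat
  assumes c: "0 < c" and n: "real n > 3 * c" and i: "i \<le> 2"
  shows "has_bochner_integral lborel (\<lambda>t. indicator {0..} t *\<^sub>R (p_basis n k c t * t ^ i))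
    (Gamma (real k + real i + 1) * Gamma (real n / c - 1 - real i) / (Gamma (real k + 1) * Gamma (real n / c)) / c ^ i)"
proof -
  define a where "a = real n / c"
  have a3: "3 < a" using n c by (simp add: a_def field_simps)
  define b where "b = a - 1 - real i"
  have b: "0 < b" using a3 i by (simp add: b_def)
  define j where "j = k + i"
  define F where "F u = u ^ j / (1 + u) powr (real j + 1 + b)" for u :: real
  define G where "G = c * Gamma (a + real k) / (Gamma (real k + 1) * Gamma a)"
  have hb: "has_bochner_integral lborel (\<lambda>u. indicator {0<..} u *\<^sub>R F u) (Beta (real j + 1) b)"
    unfolding F_def by (rule beta_prime_hb[OF b])
  have hb2: "has_bochner_integral lborel (\<lambda>t. indicator {0<..} (0 + c * t) *\<^sub>R F (0 + c * t)) (Beta (real j + 1) b /\<^sub>R \<bar>c\<bar>)"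
    using hb lborel_has_bochner_integral_real_affine_iff[of c "\<lambda>u. indicator {0<..} u *\<^sub>R F u" _ 0] c by simp
  hence hb3: "has_bochner_integral lborel (\<lambda>t. (G / c ^ i) * (indicator {0<..} (0 + c * t) *\<^sub>R F (0 + c * t)))
      ((G / c ^ i) * (Beta (real j + 1) b /\<^sub>R \<bar>c\<bar>))"
    by (rule has_bochner_integral_mult_right)
  have pt: "indicator {0..} t *\<^sub>R (p_basis n k c t * t ^ i) = (G / c ^ i) * (indicator {0<..} (0 + c * t) *\<^sub>R F (0 + c * t))"
    if "t \<noteq> 0" for t
  proof (cases "t > 0")
    case True
    have ct: "0 < c * t" using True c by simp
    have ex: "real j + 1 + b = a + real k" by (simp add: j_def b_def)
    have "p_basis n k c t * t ^ i = G * (c * t) ^ k / (1 + c * t) powr (a + real k) * t ^ i"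
      unfolding p_basis_def G_def a_def by simp
    also have "\<dots> = (G / c ^ i) * ((c * t) ^ j / (1 + c * t) powr (a + real k))"
      using c by (simp add: j_def power_add power_mult_distrib field_simps)
    finally show ?thesis using True ct by (simp add: F_def ex indicator_def)
  next
    case False
    hence "t < 0" using that by simp
    hence "\<not> 0 < c * t" using c by (simp add: mult_pos_neg not_less less_imp_le)
    thus ?thesis using \<open>t < 0\<close> by (simp add: indicator_def)
  qed
  have meas1: "(\<lambda>t. indicator {0..} t *\<^sub>R (p_basis n k c t * t ^ i)) \<in> borel_measurable lborel"
    unfolding p_basis_def by measurable
  have meas2: "(\<lambda>t. (G / c ^ i) * (indicator {0<..} (0 + c * t) *\<^sub>R F (0 + c * t))) \<in> borel_measurable lborel"
    unfolding F_def by measurable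
  have hb4: "has_bochner_integral lborel (\<lambda>t. indicator {0..} t *\<^sub>R (p_basis n k c t * t ^ i))
      ((G / c ^ i) * (Beta (real j + 1) b /\<^sub>R \<bar>c\<bar>))"
    using hb3 has_bochner_integral_cong_AE[OF meas1 meas2] AE_mp[OF AE_lborel_singleton[of 0]] pt
    by (metis (mono_tags, lifting) always_eventually)
  have val: "(G / c ^ i) * (Beta (real j + 1) b /\<^sub>R \<bar>c\<bar>) =
     Gamma (real k + real i + 1) * Gamma (a - 1 - real i) / (Gamma (real k + 1) * Gamma a) / c ^ i"
  proof -
    have g1: "Gamma (a + real k) \<noteq> 0" using a3 by (intro Gamma_real_pos[THEN less_imp_neq, symmetric]) simp
    have ex: "real j + 1 + b = a + real k" by (simp add: j_def b_def)
    have "Beta (real j + 1) b = Gamma (real k + real i + 1) * Gamma (a - 1 - real i) / Gamma (a + real k)"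
      unfolding Beta_def ex[symmetric] by (simp add: j_def b_def)
    thus ?thesis using c g1 by (simp add: G_def field_simps)
  qed
  show ?thesis using hb4 unfolding val a_def .
qed


lemma alg2:
  fixes A1 A2 A3 c X Y K1 K2 :: real
  shows "A1 \<noteq> 0 \<Longrightarrow> A2 \<noteq> 0 \<Longrightarrow> A3 \<noteq> 0 \<Longrightarrow> c \<noteq> 0 \<Longrightarrow> X \<noteq> 0 \<Longrightarrow> Y \<noteq> 0 \<Longrightarrow>
    A1 * ((K2 * K1 * X) * Y / (X * (A1 * A2 * A3 * Y)) / c ^ 2) = K1 * K2 / ((A2 * c) * (A3 * c))"
  by (simp add: field_simps power2_eq_square)

lemma alg1b:
  fixes A1 A2 A3 c X Y K1 :: real
  shows "A1 \<noteq> 0 \<Longrightarrow> A2 \<noteq> 0 \<Longrightarrow> A3 \<noteq> 0 \<Longrightarrow> c \<noteq> 0 \<Longrightarrow> X \<noteq> 0 \<Longrightarrow> Y \<noteq> 0 \<Longrightarrow>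
    A1 * ((K1 * X) * (A3 * Y) / (X * (A1 * A2 * A3 * Y)) / c) = K1 / (A2 * c)"
  by (simp add: field_simps)

definition Aop :: "nat \<Rightarrow> real \<Rightarrow> nat \<Rightarrow> (real \<Rightarrow> real) \<Rightarrow> real" where
  "Aop n c k \<phi> = (real n - c) / c * (LINT t:{0..}|lborel. p_basis n k c t * \<phi> t)"

lemma pb_nonneg: "0 < c \<Longrightarrow> 0 < real n \<Longrightarrow> 0 \<le> t \<Longrightarrow> 0 \<le> p_basis n k c t"
  unfolding p_basis_def by (intro divide_nonneg_nonneg mult_nonneg_nonneg) (auto intro!: Gamma_real_nonneg add_pos_nonneg)

lemma pb_moment_si:
  assumes c: "0 < c" and n: "real n > 3 * c" and i: "i \<le> 2"
  shows "set_integrable lborel {0..} (\<lambda>t. p_basis n k c t * t ^ i)"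
    and "(LINT t:{0..}|lborel. p_basis n k c t * t ^ i) =
    Gamma (real k + real i + 1) * Gamma (real n / c - 1 - real i) / (Gamma (real k + 1) * Gamma (real n / c)) / c ^ i"
  using integrable.intros[OF pb_moment[OF assms, of k]]
    has_bochner_integral_integral_eq[OF pb_moment[OF assms, of k]]
  unfolding set_integrable_def set_lebesgue_integral_def by auto

lemma A_moments:
  assumes c: "0 < c" and n: "real n > 3 * c"
  shows "set_integrable lborel {0..} (\<lambda>t. p_basis n k c t)"
    and "set_integrable lborel {0..} (\<lambda>t. p_basis n k c t * t)"
    and "set_integrable lborel {0..} (\<lambda>t. p_basis n k c t * t ^ 2)"
    and "Aop n c k (\<lambda>t. 1) = 1"
    and "Aop n c k (\<lambda>t. t) = (real k + 1) / (real n - 2 * c)"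
    and "Aop n c k (\<lambda>t. t ^ 2) = (real k + 1) * (real k + 2) / ((real n - 2 * c) * (real n - 3 * c))"
proof -
  define a where "a = real n / c"
  have a3: "3 < a" using n c by (simp add: a_def field_simps)
  have na: "(real n - c) / c = a - 1" using c by (simp add: a_def field_simps)
  have Ga: "Gamma a = (a - 1) * (a - 2) * (a - 3) * Gamma (a - 3)"
  proof -
    have "Gamma a = (a - 1) * Gamma (a - 1)" using Gamma_plus1_pos[of "a - 1"] a3 by simp
    also have "Gamma (a - 1) = (a - 2) * Gamma (a - 2)" using Gamma_plus1_pos[of "a - 2"] a3 by simp
    also have "Gamma (a - 2) = (a - 3) * Gamma (a - 3)" using Gamma_plus1_pos[of "a - 3"] a3 by simp
    finally show ?thesis by (simp add: mult_ac)
  qed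
  have Ga1: "Gamma (a - 1) = (a - 2) * (a - 3) * Gamma (a - 3)"
  proof -
    have "Gamma (a - 1) = (a - 2) * Gamma (a - 2)" using Gamma_plus1_pos[of "a - 2"] a3 by simp
    also have "Gamma (a - 2) = (a - 3) * Gamma (a - 3)" using Gamma_plus1_pos[of "a - 3"] a3 by simp
    finally show ?thesis by (simp add: mult_ac)
  qed
  have Ga2: "Gamma (a - 2) = (a - 3) * Gamma (a - 3)" using Gamma_plus1_pos[of "a - 3"] a3 by simp
  have Gk1: "Gamma (real k + 1 + 1) = (real k + 1) * Gamma (real k + 1)"
    using Gamma_plus1_pos[of "real k + 1"] by simp
  have Gk2: "Gamma (real k + 2 + 1) = (real k + 2) * (real k + 1) * Gamma (real k + 1)"
    using Gamma_plus1_pos[of "real k + 2"] Gk1 by (simp add: add.assoc)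
  have g3: "0 < Gamma (a - 3)" using a3 by simp
  have gk: "0 < Gamma (real k + 1)" by simp
  note M0 = pb_moment_si[OF c n, of 0 k] and M1 = pb_moment_si[OF c n, of 1 k]
    and M2 = pb_moment_si[OF c n, of 2 k]
  show "set_integrable lborel {0..} (\<lambda>t. p_basis n k c t)" using M0(1) by simp
  show "set_integrable lborel {0..} (\<lambda>t. p_basis n k c t * t)" using M1(1) by simp
  show "set_integrable lborel {0..} (\<lambda>t. p_basis n k c t * t ^ 2)" using M2(1) by simp
  have v0: "(LINT t:{0..}|lborel. p_basis n k c t) = Gamma (a - 1) / Gamma a"
    using M0(2) gk by (simp add: a_def)
  show "Aop n c k (\<lambda>t. 1) = 1"
    unfolding Aop_def na using v0 Ga Ga1 g3 a3 by simp
  have v1: "(LINT t:{0..}|lborel. p_basis n k c t * t) = Gamma (real k + 1 + 1) * Gamma (a - 2) / (Gamma (real k + 1) * Gamma a) / c"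
    using M1(2) by (simp add: a_def add_ac)
  have nz5: "Gamma (a - 3) \<noteq> 0" by (metis g3 order_less_irrefl)
  have nz6: "Gamma (real k + 1) \<noteq> 0" by (metis gk order_less_irrefl)
  have nz: "a - 1 \<noteq> 0" "a - 2 \<noteq> 0" "a - 3 \<noteq> 0" "c \<noteq> 0" "Gamma (a - 3) \<noteq> 0" "Gamma (real k + 1) \<noteq> 0"
    using a3 c nz5 nz6 by auto
  have n2: "(a - 2) * c = real n - 2 * c" and n3: "(a - 3) * c = real n - 3 * c"
    using c by (simp_all add: a_def field_simps)
  have "Aop n c k (\<lambda>t. t) = (a - 1) * (Gamma (real k + 1 + 1) * Gamma (a - 2) / (Gamma (real k + 1) * Gamma a) / c)"
    unfolding Aop_def na v1 ..
  also have "\<dots> = (real k + 1) / ((a - 2) * c)"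
    unfolding Gk1 Ga Ga2 using alg1b[OF nz(1,2,3,4,6,5), of "real k + 1"] by (simp add: mult_ac)
  finally show "Aop n c k (\<lambda>t. t) = (real k + 1) / (real n - 2 * c)" unfolding n2 .
  have v2: "(LINT t:{0..}|lborel. p_basis n k c t * t ^ 2) = Gamma (real k + 2 + 1) * Gamma (a - 3) / (Gamma (real k + 1) * Gamma a) / c ^ 2"
    using M2(2) by (simp add: a_def add_ac)
  have "Aop n c k (\<lambda>t. t ^ 2) = (a - 1) * (Gamma (real k + 2 + 1) * Gamma (a - 3) / (Gamma (real k + 1) * Gamma a) / c ^ 2)"
    unfolding Aop_def na v2 ..
  also have "\<dots> = (real k + 1) * (real k + 2) / (((a - 2) * c) * ((a - 3) * c))"
    unfolding Gk2 Ga using alg2[OF nz(1,2,3,4,6,5), of "real k + 2" "real k + 1"] by (simp add: mult_ac)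
  finally show "Aop n c k (\<lambda>t. t ^ 2) = (real k + 1) * (real k + 2) / ((real n - 2 * c) * (real n - 3 * c))"
    unfolding n2 n3 .
qed




lemma ftc_affine:
  fixes \<phi> \<phi>' :: "real \<Rightarrow> real"
  assumes a: "0 \<le> a" and m: "0 \<le> m" and d: "\<And>y. p \<le> y \<Longrightarrow> y \<le> p + m * a \<Longrightarrow> DERIV \<phi> y :> \<phi>' y"
  shows "((\<lambda>s. m * \<phi>' (p + m * s)) has_integral (\<phi> (p + m * a) - \<phi> p)) {0..a}"
proof -
  have "((\<lambda>s. \<phi> (p + m * s)) has_vector_derivative m * \<phi>' (p + m * s)) (at s within {0..a})"
    if s: "s \<in> {0..a}" for s
  proof -
    have y: "p \<le> p + m * s" "p + m * s \<le> p + m * a" using s m by (auto intro: mult_left_mono)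
    have "((\<lambda>s. \<phi> (p + m * s)) has_real_derivative \<phi>' (p + m * s) * m) (at s within {0..a})"
      by (rule DERIV_chain'[where g=\<phi>]) (auto intro!: derivative_eq_intros d y)
    thus ?thesis by (simp add: has_real_derivative_iff_has_vector_derivative mult.commute)
  qed
  from fundamental_theorem_of_calculus[OF a this] show ?thesis by simp
qed

locale smooth_ctx =
  fixes f :: "real \<Rightarrow> real" and \<delta> W :: real
  assumes fc: "continuous_on {0..} f" and d0: "0 < \<delta>" and W0: "0 \<le> W"
    and hW: "\<And>h x. 0 < h \<Longrightarrow> h \<le> \<delta> \<Longrightarrow> 0 \<le> x \<Longrightarrow> \<bar>f (x + 2 * h) - 2 * f (x + h) + f x\<bar> \<le> W"
begin

definition "ft t = f (max 0 t)"
definition "a = \<delta> / 2"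
definition "FF x = integral {-2..x} ft"
definition "FF2 x = integral {-1..x} FF"

lemma a_pos: "0 < a" using d0 by (simp add: a_def)

lemma ft_cont: "continuous_on UNIV ft"
proof -
  have "continuous_on UNIV (\<lambda>t::real. max 0 t)" by (intro continuous_intros)
  moreover have "(\<lambda>t::real. max 0 t) ` UNIV \<subseteq> {0..}" by auto
  ultimately show ?thesis unfolding ft_def[abs_def]
    using continuous_on_compose2[OF fc] by blast
qed

lemma ft_eq: "0 \<le> t \<Longrightarrow> ft t = f t" by (simp add: ft_def)

lemma FF_deriv: assumes "-2 < x" shows "DERIV FF x :> ft x"
proof -
  have "(FF has_real_derivative ft x) (at x within {-2..x+1})"
    unfolding FF_def using assms continuous_on_subset[OF ft_cont]
    by (intro integral_has_real_derivative) auto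
  moreover have "at x within {-2..x+1} = at x" using assms by (intro at_within_Icc_at) auto
  ultimately show ?thesis by simp
qed

lemma FF_cont: "continuous_on {-1..b} FF"
proof (rule continuous_at_imp_continuous_on, intro ballI)
  fix x :: real assume "x \<in> {-1..b}"
  hence "-2 < x" by auto
  thus "isCont FF x" by (rule DERIV_isCont[OF FF_deriv])
qed

lemma FF2_deriv: assumes "-1 < x" shows "DERIV FF2 x :> FF x"
proof -
  have "(FF2 has_real_derivative FF x) (at x within {-1..x+1})"
    unfolding FF2_def using assms FF_cont
    by (intro integral_has_real_derivative) auto
  moreover have "at x within {-1..x+1} = at x" using assms by (intro at_within_Icc_at) auto
  ultimately show ?thesis by simp
qed

definition "gg x = (1 / a^2) * (2 * (FF2 (x + 2*a) - 2 * FF2 (x + a) + FF2 x) - (1/4) * (FF2 (x + 4*a) - 2 * FF2 (x + 2*a) + FF2 x))"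
definition "gg1 x = (1 / a^2) * (2 * (FF (x + 2*a) - 2 * FF (x + a) + FF x) - (1/4) * (FF (x + 4*a) - 2 * FF (x + 2*a) + FF x))"
definition "gg2 x = (1 / a^2) * (2 * (ft (x + 2*a) - 2 * ft (x + a) + ft x) - (1/4) * (ft (x + 4*a) - 2 * ft (x + 2*a) + ft x))"

lemma FF2_shift: assumes "-1 < x + c" shows "DERIV (\<lambda>x. FF2 (x + c)) x :> FF (x + c)"
proof -
  have "DERIV (\<lambda>x. x + c) x :> 1" by (auto intro!: derivative_eq_intros)
  from DERIV_chain2[where f = FF2 and g = "\<lambda>x. x + c", OF FF2_deriv[OF assms] this] show ?thesis by simp
qed

lemma FF_shift: assumes "-2 < x + c" shows "DERIV (\<lambda>x. FF (x + c)) x :> ft (x + c)"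
proof -
  have "DERIV (\<lambda>x. x + c) x :> 1" by (auto intro!: derivative_eq_intros)
  from DERIV_chain2[where f = FF and g = "\<lambda>x. x + c", OF FF_deriv[OF assms] this] show ?thesis by simp
qed

lemma gg_deriv: assumes "-1 < x" shows "DERIV gg x :> gg1 x"
proof -
  have p: "-1 < x + 2*a" "-1 < x + a" "-1 < x + 4*a" using assms a_pos by auto
  show ?thesis unfolding gg_def[abs_def] gg1_def
    by (intro DERIV_cmult DERIV_diff DERIV_add FF2_shift p FF2_deriv assms)
qed

lemma gg1_deriv: assumes "-1 < x" shows "DERIV gg1 x :> gg2 x"
proof -
  have p: "-2 < x + 2*a" "-2 < x + a" "-2 < x + 4*a" "-2 < x" using assms a_pos by auto
  show ?thesis unfolding gg1_def[abs_def] gg2_def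
    by (intro DERIV_cmult DERIV_diff DERIV_add FF_shift p FF_deriv)
qed


lemma gg2_bound: assumes "0 \<le> x" shows "\<bar>gg2 x\<bar> \<le> 9 / 4 * W / a^2"
proof -
  have a: "0 < a" "a \<le> \<delta>" "2 * a \<le> \<delta>" using a_pos d0 by (auto simp: a_def)
  have b1: "\<bar>ft (x + 2*a) - 2 * ft (x + a) + ft x\<bar> \<le> W"
    using hW[of a x] a assms by (simp add: ft_eq)
  have b2: "\<bar>ft (x + 4*a) - 2 * ft (x + 2*a) + ft x\<bar> \<le> W"
    using hW[of "2*a" x] a assms by (simp add: ft_eq mult.assoc)
  have "\<bar>2 * (ft (x + 2*a) - 2 * ft (x + a) + ft x) - (1/4) * (ft (x + 4*a) - 2 * ft (x + 2*a) + ft x)\<bar> \<le> 2 * W + (1/4) * W"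
  proof -
    have t: "\<bar>2 * X - (1/4) * Y\<bar> \<le> 2 * \<bar>X\<bar> + (1/4) * \<bar>Y\<bar>" for X Y :: real
      using abs_triangle_ineq4[of "2*X" "(1/4)*Y"] by (simp add: abs_mult)
    have "2 * \<bar>ft (x + 2*a) - 2 * ft (x + a) + ft x\<bar> + (1/4) * \<bar>ft (x + 4*a) - 2 * ft (x + 2*a) + ft x\<bar>
        \<le> 2 * W + (1/4) * W" using b1 b2 by (intro add_mono mult_left_mono) auto
    thus ?thesis using t[of "ft (x + 2*a) - 2 * ft (x + a) + ft x" "ft (x + 4*a) - 2 * ft (x + 2*a) + ft x"]
      by (rule order_trans[rotated])
  qed
  moreover have "\<bar>gg2 x\<bar> = \<bar>2 * (ft (x + 2*a) - 2 * ft (x + a) + ft x) - (1/4) * (ft (x + 4*a) - 2 * ft (x + 2*a) + ft x)\<bar> / a^2"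
    unfolding gg2_def by (simp add: abs_mult)
  ultimately have "\<bar>gg2 x\<bar> \<le> (2 * W + (1/4) * W) / a^2"
    by (metis divide_right_mono zero_le_power2)
  thus ?thesis by simp
qed

lemma taylor_bound: assumes x: "0 \<le> x" and t: "0 \<le> t"
  shows "\<bar>gg t - gg x - gg1 x * (t - x)\<bar> \<le> 9 / 8 * W / a^2 * (t - x)^2"
proof (cases "t = x")
  case True thus ?thesis by simp
next
  case False
  define diff where "diff m = (if m = 0 then gg else if m = 1 then gg1 else gg2)" for m :: nat
  have D: "\<forall>m u. m < 2 \<and> min x t \<le> u \<and> u \<le> max x t \<longrightarrow> DERIV (diff m) u :> diff (Suc m) u"
  proof (intro allI impI)
    fix m :: nat and u :: real assume h: "m < 2 \<and> min x t \<le> u \<and> u \<le> max x t"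
    hence u: "-1 < u" using x t by (auto simp: min_def split: if_splits)
    show "DERIV (diff m) u :> diff (Suc m) u"
    proof (cases "m = 0")
      case True thus ?thesis using gg_deriv[OF u] by (simp add: diff_def)
    next
      case False hence "m = 1" using h by auto
      thus ?thesis using gg1_deriv[OF u] by (simp add: diff_def)
    qed
  qed
  obtain \<xi> where \<xi>: "(if t < x then t < \<xi> \<and> \<xi> < x else x < \<xi> \<and> \<xi> < t)"
    and eq: "gg t = (\<Sum>m<2. diff m x / fact m * (t - x) ^ m) + diff 2 \<xi> / fact 2 * (t - x) ^ 2"
    using Taylor[of 2 diff gg "min x t" "max x t" x t] D False by (auto simp: diff_def)
  have \<xi>0: "0 \<le> \<xi>" using \<xi> x t by (auto split: if_splits)
  have E: "gg t - gg x - gg1 x * (t - x) = gg2 \<xi> / 2 * (t - x)^2"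
    using eq by (simp add: diff_def numeral_2_eq_2)
  have "\<bar>gg t - gg x - gg1 x * (t - x)\<bar> = \<bar>gg2 \<xi> / 2 * (t - x)^2\<bar>" by (rule arg_cong[where f=abs, OF E])
  also have "\<dots> = \<bar>gg2 \<xi>\<bar> / 2 * (t - x)^2" by (simp add: abs_mult)
  also have "\<dots> \<le> (9 / 4 * W / a^2) / 2 * (t - x)^2"
    using gg2_bound[OF \<xi>0] by (intro mult_right_mono divide_right_mono) auto
  finally show ?thesis by simp
qed

lemma approx_bound: assumes x: "0 \<le> x" shows "\<bar>f x - gg x\<bar> \<le> W"
proof -
  have a0: "0 < a" using a_pos .
  define \<psi> where "\<psi> r = a * f x - 2 * (FF (x + r + 1 * a) - FF (x + r)) + (1/2) * (FF (x + 2 * r + 2 * a) - FF (x + 2 * r))" for r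
  have psi_b: "\<bar>\<psi> r\<bar> \<le> W * a" if r: "r \<in> {0..a}" for r
  proof -
    have i1: "((\<lambda>s. 1 * ft (x + r + 1 * s)) has_integral (FF (x + r + 1 * a) - FF (x + r))) {0..a}"
      by (rule ftc_affine) (use a0 x r in \<open>auto intro!: FF_deriv\<close>)
    have i2: "((\<lambda>s. 2 * ft (x + 2 * r + 2 * s)) has_integral (FF (x + 2 * r + 2 * a) - FF (x + 2 * r))) {0..a}"
      by (rule ftc_affine) (use a0 x r in \<open>auto intro!: FF_deriv\<close>)
    have i0: "((\<lambda>s. f x) has_integral a * f x) {0..a}"
      using has_integral_const_real[of "f x" 0 a] a0 by simp
    have iall: "((\<lambda>s. f x - 2 * (1 * ft (x + r + 1 * s)) + (1/2) * (2 * ft (x + 2 * r + 2 * s))) has_integral \<psi> r) {0..a}"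
      unfolding \<psi>_def by (intro has_integral_add has_integral_diff has_integral_mult_right i0 i1 i2)
    have bnd: "norm (f x - 2 * (1 * ft (x + r + 1 * s)) + (1/2) * (2 * ft (x + 2 * r + 2 * s))) \<le> W"
      if s: "s \<in> cbox 0 a" for s
    proof -
      define h where "h = r + s"
      have h: "0 \<le> h" "h \<le> \<delta>" using r s by (auto simp: h_def a_def)
      have e: "f x - 2 * (1 * ft (x + r + 1 * s)) + (1/2) * (2 * ft (x + 2 * r + 2 * s)) = f (x + 2 * h) - 2 * f (x + h) + f x"
        using x h by (simp add: ft_eq h_def algebra_simps)
      show ?thesis
      proof (cases "h = 0")
        case True thus ?thesis unfolding e using W0 by simp
      next
        case False thus ?thesis unfolding e using hW[of h x] h x by simp
      qed
    qed
    have "norm (\<psi> r) \<le> W * measure lborel (cbox 0 a)"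
      by (rule has_integral_bound[OF W0 _ bnd]) (use iall in simp)
    thus ?thesis using a0 by simp
  qed
  define \<Psi> where "\<Psi> r = a * f x * r - 2 * (FF2 (x + r + a) - FF2 (x + r)) + (1/4) * (FF2 (x + 2 * r + 2 * a) - FF2 (x + 2 * r))" for r
  have dPsi: "(\<Psi> has_vector_derivative \<psi> r) (at r within {0..a})" if r: "r \<in> {0..a}" for r
  proof -
    have p: "-1 < x + r + a" "-1 < x + r" "-1 < x + 2 * r + 2 * a" "-1 < x + 2 * r" using x r a0 by auto
    have c1: "DERIV (\<lambda>r. FF2 (x + r + a)) r :> FF (x + r + a) * 1"
      by (rule DERIV_chain2[where f=FF2 and g="\<lambda>r. x + r + a", OF FF2_deriv[OF p(1)]]) (auto intro!: derivative_eq_intros)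
    have c2: "DERIV (\<lambda>r. FF2 (x + r)) r :> FF (x + r) * 1"
      by (rule DERIV_chain2[where f=FF2 and g="\<lambda>r. x + r", OF FF2_deriv[OF p(2)]]) (auto intro!: derivative_eq_intros)
    have c3: "DERIV (\<lambda>r. FF2 (x + 2 * r + 2 * a)) r :> FF (x + 2 * r + 2 * a) * 2"
      by (rule DERIV_chain2[where f=FF2 and g="\<lambda>r. x + 2 * r + 2 * a", OF FF2_deriv[OF p(3)]]) (auto intro!: derivative_eq_intros)
    have c4: "DERIV (\<lambda>r. FF2 (x + 2 * r)) r :> FF (x + 2 * r) * 2"
      by (rule DERIV_chain2[where f=FF2 and g="\<lambda>r. x + 2 * r", OF FF2_deriv[OF p(4)]]) (auto intro!: derivative_eq_intros)
    have c0: "DERIV (\<lambda>r. a * f x * r) r :> a * f x" by (auto intro!: derivative_eq_intros)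
    have "DERIV \<Psi> r :> a * f x - 2 * (FF (x + r + a) * 1 - FF (x + r) * 1) + (1/4) * (FF (x + 2 * r + 2 * a) * 2 - FF (x + 2 * r) * 2)"
      unfolding \<Psi>_def[abs_def] by (intro DERIV_add DERIV_diff DERIV_cmult c0 c1 c2 c3 c4)
    moreover have "a * f x - 2 * (FF (x + r + a) * 1 - FF (x + r) * 1) + (1/4) * (FF (x + 2 * r + 2 * a) * 2 - FF (x + 2 * r) * 2) = \<psi> r"
      by (simp add: \<psi>_def algebra_simps)
    ultimately have "DERIV \<Psi> r :> \<psi> r" by simp
    thus ?thesis by (simp add: has_real_derivative_iff_has_vector_derivative has_vector_derivative_at_within)
  qed
  have ip: "(\<psi> has_integral (\<Psi> a - \<Psi> 0)) {0..a}"
    using fundamental_theorem_of_calculus[OF less_imp_le[OF a0] dPsi] by simp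
  have "norm (\<Psi> a - \<Psi> 0) \<le> (W * a) * measure lborel (cbox 0 a)"
  proof (rule has_integral_bound)
    show "(\<psi> has_integral \<Psi> a - \<Psi> 0) (cbox 0 a)" using ip by simp
  qed (use W0 a0 psi_b in auto)
  hence b: "\<bar>\<Psi> a - \<Psi> 0\<bar> \<le> W * a^2" using a0 by (simp add: power2_eq_square)
  have "\<Psi> a - \<Psi> 0 = a^2 * (f x - gg x)"
    using a0 by (simp add: \<Psi>_def gg_def power2_eq_square algebra_simps)
  hence "a^2 * \<bar>f x - gg x\<bar> \<le> a^2 * W" using b by (simp add: abs_mult mult.commute)
  thus ?thesis using a0 by simp
qed

end



lemma cont_meas: assumes "continuous_on {0..} (\<phi> :: real \<Rightarrow> real)"
  shows "set_borel_measurable lborel {0..} \<phi>"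
  unfolding set_borel_measurable_def
  using borel_measurable_continuous_on_indicator[OF _ assms] by simp

lemma pb_meas: "(\<lambda>t. p_basis n k c t) \<in> borel_measurable lborel"
  unfolding p_basis_def by measurable

lemma si_bounded:
  assumes c: "0 < c" and n: "real n > 3 * c" and cont: "continuous_on {0..} \<phi>"
    and bd: "\<And>t. 0 \<le> t \<Longrightarrow> \<bar>\<phi> t\<bar> \<le> C"
  shows "set_integrable lborel {0..} (\<lambda>t. p_basis n k c t * \<phi> t)"
proof (rule set_integrable_bound)
  show "set_integrable lborel {0..} (\<lambda>t. C * p_basis n k c t)"
    by (rule set_integrable_mult_right) (rule A_moments(1)[OF c n])
  have "(\<lambda>t. p_basis n k c t * (indicator {0..} t *\<^sub>R \<phi> t)) \<in> borel_measurable lborel"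
    using pb_meas cont_meas[OF cont] unfolding set_borel_measurable_def by measurable
  thus "set_borel_measurable lborel {0..} (\<lambda>t. p_basis n k c t * \<phi> t)"
    unfolding set_borel_measurable_def by (simp add: mult_ac indicator_def)
  have n0: "0 < real n" using n c by simp
  show "AE t in lborel. t \<in> {0..} \<longrightarrow> norm (p_basis n k c t * \<phi> t) \<le> norm (C * p_basis n k c t)"
  proof (intro AE_I2 impI)
    fix t :: real assume t: "t \<in> {0..}"
    have p: "0 \<le> p_basis n k c t" using pb_nonneg[OF c n0] t by simp
    have "\<bar>p_basis n k c t * \<phi> t\<bar> = p_basis n k c t * \<bar>\<phi> t\<bar>" using p by (simp add: abs_mult)
    also have "\<dots> \<le> p_basis n k c t * C" using bd t p by (intro mult_left_mono) auto
    also have "\<dots> \<le> \<bar>C * p_basis n k c t\<bar>" using p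
      by (simp add: abs_mult mult.commute) (intro mult_right_mono, auto)
    finally show "norm (p_basis n k c t * \<phi> t) \<le> norm (C * p_basis n k c t)" by simp
  qed
qed

lemma Aop_add:
  assumes "set_integrable lborel {0..} (\<lambda>t. p_basis n k c t * \<phi> t)"
    "set_integrable lborel {0..} (\<lambda>t. p_basis n k c t * \<psi> t)"
  shows "Aop n c k (\<lambda>t. \<phi> t + \<psi> t) = Aop n c k \<phi> + Aop n c k \<psi>"
    and "Aop n c k (\<lambda>t. \<phi> t - \<psi> t) = Aop n c k \<phi> - Aop n c k \<psi>"
  using set_integral_add(2)[OF assms] set_integral_diff(2)[OF assms]
  unfolding Aop_def by (simp_all add: distrib_left right_diff_distrib)

lemma Aop_cmult: "Aop n c k (\<lambda>t. r * \<phi> t) = r * Aop n c k \<phi>"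
  unfolding Aop_def by (simp add: mult.left_commute)

lemma Aop_mono:
  assumes c: "0 < c" and n: "real n > 3 * c"
    and "set_integrable lborel {0..} (\<lambda>t. p_basis n k c t * \<phi> t)"
    "set_integrable lborel {0..} (\<lambda>t. p_basis n k c t * \<psi> t)"
    and le: "\<And>t. 0 \<le> t \<Longrightarrow> \<phi> t \<le> \<psi> t"
  shows "Aop n c k \<phi> \<le> Aop n c k \<psi>"
proof -
  have n0: "0 < real n" using n c by simp
  have "(LINT t:{0..}|lborel. p_basis n k c t * \<phi> t) \<le> (LINT t:{0..}|lborel. p_basis n k c t * \<psi> t)"
    using assms(3,4) by (rule set_integral_mono) (use le pb_nonneg[OF c n0] in \<open>auto intro: mult_left_mono\<close>)
  moreover have "0 \<le> (real n - c) / c" using n c by simp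
  ultimately show ?thesis unfolding Aop_def by (rule mult_left_mono)
qed

lemma Aop_abs:
  assumes c: "0 < c" and n: "real n > 3 * c"
    and "set_integrable lborel {0..} (\<lambda>t. p_basis n k c t * \<phi> t)"
    "set_integrable lborel {0..} (\<lambda>t. p_basis n k c t * \<psi> t)"
    and le: "\<And>t. 0 \<le> t \<Longrightarrow> \<bar>\<phi> t\<bar> \<le> \<psi> t"
  shows "\<bar>Aop n c k \<phi>\<bar> \<le> Aop n c k \<psi>"
proof -
  have "Aop n c k \<phi> \<le> Aop n c k \<psi>" using le by (intro Aop_mono[OF c n assms(3,4)]) (auto simp: abs_le_iff)
  moreover have "Aop n c k (\<lambda>t. - 1 * \<phi> t) \<le> Aop n c k \<psi>"
  proof (rule Aop_mono[OF c n _ assms(4)])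
    have "set_integrable lborel {0..} (\<lambda>t. (- 1) * (p_basis n k c t * \<phi> t))"
      by (rule set_integrable_mult_right) (rule assms(3))
    thus "set_integrable lborel {0..} (\<lambda>t. p_basis n k c t * (- 1 * \<phi> t))"
      by (simp add: algebra_simps)
  qed (use le in \<open>auto simp: abs_le_iff\<close>)
  ultimately show ?thesis unfolding Aop_cmult by simp
qed


lemma omega2_facts:
  assumes bd: "bounded (f ` {0..})"
  shows "0 \<le> omega2 f \<delta>"
    and "\<And>h x. 0 < h \<Longrightarrow> h \<le> \<delta> \<Longrightarrow> 0 \<le> x \<Longrightarrow> \<bar>f (x + 2 * h) - 2 * f (x + h) + f x\<bar> \<le> omega2 f \<delta>"
proof -
  obtain B where B: "\<And>t. 0 \<le> t \<Longrightarrow> \<bar>f t\<bar> \<le> B" using bd unfolding bounded_iff by auto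
  define S where "S = insert 0 {\<bar>f (x + 2 * h) - 2 * f (x + h) + f x\<bar> | h x. 0 < h \<and> h \<le> \<delta> \<and> 0 \<le> x}"
  have bdd: "bdd_above S"
  proof (rule bdd_aboveI[where M="4 * B"])
    fix y assume "y \<in> S"
    then consider "y = 0" | h x where "y = \<bar>f (x + 2 * h) - 2 * f (x + h) + f x\<bar>" "0 < h" "0 \<le> x"
      unfolding S_def by auto
    thus "y \<le> 4 * B"
    proof cases
      case 1 thus ?thesis using B[of 0] by simp
    next
      case 2
      have "\<bar>f (x + 2 * h)\<bar> \<le> B" "\<bar>f (x + h)\<bar> \<le> B" "\<bar>f x\<bar> \<le> B" using B 2 by auto
      thus ?thesis using 2 by (simp add: abs_le_iff)
    qed
  qed
  show "0 \<le> omega2 f \<delta>" unfolding omega2_def S_def[symmetric]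
    using bdd by (intro cSup_upper2[of 0]) (auto simp: S_def)
  fix h x :: real assume "0 < h" "h \<le> \<delta>" "0 \<le> x"
  thus "\<bar>f (x + 2 * h) - 2 * f (x + h) + f x\<bar> \<le> omega2 f \<delta>" unfolding omega2_def S_def[symmetric]
    using bdd by (intro cSup_upper) (auto simp: S_def)
qed

lemma mu2_alg:
  fixes N2 N3 c x \<beta> hh u W2 :: real
  assumes b: "\<beta> < 1" and hh: "hh = 1 / (1 - \<beta>)" and u: "u = N2 * (1 - \<beta>) * x"
    and N: "N2 = N3 + c" "N2 \<noteq> 0" "N3 \<noteq> 0"
    and W2: "W2 = u * (hh + (hh^2 * (u + \<beta>) + \<beta> * hh^3))"
  shows "(W2 + N2 * x) / (N2 * N3) - x^2 = c / N3 * x^2 + (2 - 2 * \<beta> + \<beta>^2) / (N3 * (1 - \<beta>)^2) * x"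
proof -
  define d where "d = 1 - \<beta>"
  have d: "d \<noteq> 0" using b by (simp add: d_def)
  have bd: "\<beta> = 1 - d" by (simp add: d_def)
  have W2': "W2 = N2 * x * (1 + N2 * x + (1 - d) / d + (1 - d) / d^2)"
    unfolding W2 u hh bd using d by (simp add: field_simps power2_eq_square power3_eq_cube)
  have cN: "c = N2 - N3" using N(1) by simp
  show ?thesis unfolding W2' bd cN using d N(2,3) by (simp add: field_simps power2_eq_square)
qed


lemma si_add: "set_integrable lborel {0..} (\<lambda>t. p_basis n k c t * \<phi> t) \<Longrightarrow>
  set_integrable lborel {0..} (\<lambda>t. p_basis n k c t * \<psi> t) \<Longrightarrow>
  set_integrable lborel {0..} (\<lambda>t. p_basis n k c t * (\<phi> t + \<psi> t))"
  using set_integral_add(1) by (simp add: distrib_left)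

lemma si_diff: "set_integrable lborel {0..} (\<lambda>t. p_basis n k c t * \<phi> t) \<Longrightarrow>
  set_integrable lborel {0..} (\<lambda>t. p_basis n k c t * \<psi> t) \<Longrightarrow>
  set_integrable lborel {0..} (\<lambda>t. p_basis n k c t * (\<phi> t - \<psi> t))"
  using set_integral_diff(1) by (simp add: right_diff_distrib)

lemma si_cmult: "set_integrable lborel {0..} (\<lambda>t. p_basis n k c t * \<phi> t) \<Longrightarrow>
  set_integrable lborel {0..} (\<lambda>t. p_basis n k c t * (r * \<phi> t))"
proof -
  assume a: "set_integrable lborel {0..} (\<lambda>t. p_basis n k c t * \<phi> t)"
  have "set_integrable lborel {0..} (\<lambda>t. r * (p_basis n k c t * \<phi> t))"
    by (rule set_integrable_mult_right) (rule a)
  thus ?thesis by (simp add: mult.left_commute)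
qed

lemma si_const: "0 < c \<Longrightarrow> real n > 3 * c \<Longrightarrow> set_integrable lborel {0..} (\<lambda>t. p_basis n k c t * r)"
  using set_integrable_mult_left[of r lborel "{0..}" "\<lambda>t. p_basis n k c t"] A_moments(1) by auto

lemma si_id: "0 < c \<Longrightarrow> real n > 3 * c \<Longrightarrow> set_integrable lborel {0..} (\<lambda>t. p_basis n k c t * t)"
  by (rule A_moments(2))

lemma si_sq: "0 < c \<Longrightarrow> real n > 3 * c \<Longrightarrow> set_integrable lborel {0..} (\<lambda>t. p_basis n k c t * t ^ 2)"
  by (rule A_moments(3))

locale main_ctx =
  fixes c \<beta> :: real and n :: nat and x :: real and f :: "real \<Rightarrow> real"
  assumes c: "0 < c" and n: "real n > 3 * c" and b0: "0 < \<beta>" and b1: "\<beta> < 1"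
    and x: "0 < x" and fc: "continuous_on {0..} f" and fb: "bounded (f ` {0..})"
begin

definition "N2 = real n - 2 * c"
definition "N3 = real n - 3 * c"
definition "u = real n * r_n n c \<beta> x"
definition "w v = omega_beta \<beta> (Suc v) u"
definition "mu = mu2 n c \<beta> x"
definition "\<delta> = sqrt mu"
definition "W = omega2 f \<delta>"

lemma N3_pos: "0 < N3" using n by (simp add: N3_def)
lemma N2_pos: "0 < N2" using n c by (simp add: N2_def)
lemma n_pos: "0 < real n" using n c by simp

lemma u_eq: "u = N2 * (1 - \<beta>) * x"
  using n_pos by (simp add: u_def r_n_def N2_def)

lemma u_nonneg: "0 \<le> u" unfolding u_eq using N2_pos b1 x by simp

lemma w_nonneg: "0 \<le> w v"
  unfolding w_def omega_beta_def using u_nonneg b0 by simp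

lemma mu_pos: "0 < mu"
proof -
  have "0 < c / N3 * x^2" using c N3_pos x by simp
  moreover have "0 < (2 - 2 * \<beta> + \<beta>^2) / (N3 * (1 - \<beta>)^2) * x"
  proof -
    have "2 - 2 * \<beta> + \<beta>^2 = 1 + (1 - \<beta>)^2" by (simp add: power2_eq_square algebra_simps)
    hence "0 < 2 - 2 * \<beta> + \<beta>^2" by (metis add_pos_nonneg zero_le_power2 zero_less_one)
    thus ?thesis using N3_pos b1 x by simp
  qed
  ultimately show ?thesis unfolding mu_def mu2_def N3_def by simp
qed

lemma d_pos: "0 < \<delta>" using mu_pos by (simp add: \<delta>_def)
lemma d_sq: "\<delta>^2 = mu" using mu_pos by (simp add: \<delta>_def)

lemma W_facts: "0 \<le> W" "\<And>h y. 0 < h \<Longrightarrow> h \<le> \<delta> \<Longrightarrow> 0 \<le> y \<Longrightarrow> \<bar>f (y + 2 * h) - 2 * f (y + h) + f y\<bar> \<le> W"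
  using omega2_facts[OF fb] unfolding W_def by auto

sublocale B: beta_ctx \<beta> using b0 b1 by unfold_locales
sublocale S: smooth_ctx f \<delta> W using fc d_pos W_facts by unfold_locales auto


definition "Bf = (SOME B. \<forall>t\<ge>0. \<bar>f t\<bar> \<le> B)"
lemma Bf: "0 \<le> t \<Longrightarrow> \<bar>f t\<bar> \<le> Bf"
proof -
  have "\<exists>B. \<forall>t\<ge>0. \<bar>f t\<bar> \<le> B" using fb unfolding bounded_iff by auto
  hence "\<forall>t\<ge>0. \<bar>f t\<bar> \<le> Bf" unfolding Bf_def by (rule someI_ex)
  thus "0 \<le> t \<Longrightarrow> \<bar>f t\<bar> \<le> Bf" by auto
qed

definition "K = 9 / 8 * W / S.a^2"
lemma K_mu: "K * mu = 9 / 2 * W"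
proof -
  have e: "S.a^2 = mu / 4" unfolding S.a_def using d_sq by (simp add: power_divide)
  show ?thesis unfolding K_def e using mu_pos by (simp add: field_simps)
qed

lemma gg_cont: "continuous_on {0..} S.gg"
proof (rule continuous_at_imp_continuous_on, intro ballI)
  fix t :: real assume "t \<in> {0..}"
  hence "-1 < t" by auto
  thus "isCont S.gg t" by (rule DERIV_isCont[OF S.gg_deriv])
qed

lemma gg_bd: "0 \<le> t \<Longrightarrow> \<bar>S.gg t\<bar> \<le> Bf + W"
  using S.approx_bound[of t] Bf[of t] by linarith

lemma fmg_bd: "0 \<le> t \<Longrightarrow> \<bar>f t - S.gg t\<bar> \<le> W"
  using S.approx_bound .

abbreviation "A k \<phi> \<equiv> Aop n c k \<phi>"
abbreviation "si k \<phi> \<equiv> set_integrable lborel {0..} (\<lambda>t. p_basis n k c t * \<phi> t)"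

lemma si_f: "si k f" by (rule si_bounded[OF c n fc Bf])
lemma si_g: "si k S.gg" by (rule si_bounded[OF c n gg_cont gg_bd])
lemma si_1: "si k (\<lambda>t. r)" by (rule si_const[OF c n])
lemma si_t: "si k (\<lambda>t. t)" by (rule si_id[OF c n])
lemma si_t2: "si k (\<lambda>t. t^2)" by (rule si_sq[OF c n])

lemma si_sqx: "si k (\<lambda>t. (t - x)^2)"
proof -
  have "si k (\<lambda>t. t^2 - 2 * x * t + x^2)"
    by (intro si_add si_diff si_cmult si_t si_t2 si_1)
  thus ?thesis by (simp add: power2_eq_square algebra_simps)
qed

lemma A1: "A k (\<lambda>t. r) = r"
  using Aop_cmult[of n c k r "\<lambda>t. 1"] A_moments(4)[OF c n] by simp
lemma At: "A k (\<lambda>t. t) = (real k + 1) / N2" using A_moments(5)[OF c n] by (simp add: N2_def)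
lemma At2: "A k (\<lambda>t. t^2) = (real k + 1) * (real k + 2) / (N2 * N3)"
  using A_moments(6)[OF c n] by (simp add: N2_def N3_def)

lemma Asqx: "A k (\<lambda>t. (t - x)^2) = A k (\<lambda>t. t^2) - 2 * x * A k (\<lambda>t. t) + x^2"
proof -
  have e: "(\<lambda>t. (t - x)^2) = (\<lambda>t. (t^2 - (2 * x) * t) + x^2)"
    by (rule ext) (simp add: power2_eq_square algebra_simps)
  have i1: "si k (\<lambda>t. t^2 - (2 * x) * t)" by (intro si_diff si_cmult si_t si_t2)
  show ?thesis unfolding e Aop_add(1)[OF i1 si_1] Aop_add(2)[OF si_t2 si_cmult[OF si_t]] Aop_cmult A1 by simp
qed

definition "E k = A k f - f x - S.gg1 x * (A k (\<lambda>t. t) - x)"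

lemma E_bound: "\<bar>E k\<bar> \<le> 2 * W + K * A k (\<lambda>t. (t - x)^2)"
proof -
  define R where "R t = S.gg t - S.gg x - S.gg1 x * (t - x)" for t
  have siR: "si k R"
  proof -
    have "si k (\<lambda>t. S.gg t - (S.gg x - S.gg1 x * x) - S.gg1 x * t)"
      by (intro si_diff si_cmult si_g si_t si_1)
    thus ?thesis unfolding R_def by (simp add: algebra_simps)
  qed
  have AR: "A k R = A k S.gg - S.gg x - S.gg1 x * (A k (\<lambda>t. t) - x)"
  proof -
    have "R = (\<lambda>t. (S.gg t - (S.gg x - S.gg1 x * x)) - S.gg1 x * t)"
      by (rule ext) (simp add: R_def algebra_simps)
    hence "A k R = (A k S.gg - (S.gg x - S.gg1 x * x)) - S.gg1 x * A k (\<lambda>t. t)"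
      using Aop_add(2)[OF si_diff[OF si_g si_1] si_cmult[OF si_t]] Aop_add(2)[OF si_g si_1] Aop_cmult A1
      by simp
    thus ?thesis by (simp add: algebra_simps)
  qed
  have Afg: "A k (\<lambda>t. f t - S.gg t) = A k f - A k S.gg" by (rule Aop_add(2)[OF si_f si_g])
  have eq: "E k = A k (\<lambda>t. f t - S.gg t) + A k R + (S.gg x - f x)"
    unfolding E_def Afg AR by simp
  have b1: "\<bar>A k (\<lambda>t. f t - S.gg t)\<bar> \<le> A k (\<lambda>t. W)"
    by (rule Aop_abs[OF c n si_diff[OF si_f si_g] si_1]) (rule fmg_bd)
  have b2: "\<bar>A k R\<bar> \<le> A k (\<lambda>t. K * (t - x)^2)"
  proof (rule Aop_abs[OF c n siR si_cmult[OF si_sqx]])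
    fix t :: real assume t: "0 \<le> t"
    have "\<bar>R t\<bar> \<le> 9 / 8 * W / S.a^2 * (t - x)^2"
      unfolding R_def by (rule S.taylor_bound) (use x t in auto)
    thus "\<bar>R t\<bar> \<le> K * (t - x)^2" by (simp add: K_def)
  qed
  have b3: "\<bar>S.gg x - f x\<bar> \<le> W" using fmg_bd[of x] x by simp
  have "\<bar>E k\<bar> \<le> \<bar>A k (\<lambda>t. f t - S.gg t)\<bar> + \<bar>A k R\<bar> + \<bar>S.gg x - f x\<bar>"
    unfolding eq by linarith
  also have "\<dots> \<le> W + K * A k (\<lambda>t. (t - x)^2) + W"
    using b1 b2 b3 unfolding A1 Aop_cmult by linarith
  finally show ?thesis by simp
qed

lemma hh_eq: "B.hh = 1 / (1 - \<beta>)" by (rule B.hh_val)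

lemma S0: "(\<lambda>v. w v) sums (1 - exp (- u))"
  unfolding w_def by (rule B.W0[OF u_nonneg])

lemma uhh: "u * B.hh = N2 * x" unfolding u_eq hh_eq using b1 by simp

lemma S1: "(\<lambda>v. w v * A v (\<lambda>t. t)) sums x"
proof -
  have "(\<lambda>v. real (Suc v) * w v / N2) sums (u * B.hh / N2)"
    unfolding w_def by (intro sums_divide B.W1[OF u_nonneg])
  moreover have "u * B.hh / N2 = x" using uhh N2_pos by simp
  moreover have "real (Suc v) * w v / N2 = w v * A v (\<lambda>t. t)" for v unfolding At by simp
  ultimately show ?thesis by simp
qed

lemma S2: "(\<lambda>v. w v * A v (\<lambda>t. (t - x)^2)) sums (mu - exp (- u) * x^2)"
proof -
  define W2s where "W2s = u * (B.hh + (B.hh^2 * (u + \<beta>) + \<beta> * B.hh^3))"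
  have s2: "(\<lambda>v. (real (Suc v))^2 * w v) sums W2s" unfolding w_def W2s_def by (rule B.W2[OF u_nonneg])
  have s1: "(\<lambda>v. real (Suc v) * w v) sums (N2 * x)" unfolding w_def uhh[symmetric] by (rule B.W1[OF u_nonneg])
  have "(\<lambda>v. (real (Suc v))^2 * w v / (N2 * N3) + real (Suc v) * w v / (N2 * N3) - (2 * x / N2) * (real (Suc v) * w v) + x^2 * w v)
     sums (W2s / (N2 * N3) + N2 * x / (N2 * N3) - (2 * x / N2) * (N2 * x) + x^2 * (1 - exp (- u)))"
    by (intro sums_add sums_diff sums_divide sums_mult s1 s2 S0)
  moreover have "(real (Suc v))^2 * w v / (N2 * N3) + real (Suc v) * w v / (N2 * N3) - (2 * x / N2) * (real (Suc v) * w v) + x^2 * w v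
      = w v * A v (\<lambda>t. (t - x)^2)" for v
    unfolding Asqx At2 At using N2_pos N3_pos by (simp add: field_simps power2_eq_square)
  moreover have "W2s / (N2 * N3) + N2 * x / (N2 * N3) - (2 * x / N2) * (N2 * x) + x^2 * (1 - exp (- u)) = mu - exp (- u) * x^2"
  proof -
    have alg: "(W2s + N2 * x) / (N2 * N3) - x^2 = c / N3 * x^2 + (2 - 2 * \<beta> + \<beta>^2) / (N3 * (1 - \<beta>)^2) * x"
      by (rule mu2_alg[OF b1 hh_eq u_eq]) (use N2_pos N3_pos in \<open>auto simp: N2_def N3_def W2s_def\<close>)
    have "mu = c / N3 * x^2 + (2 - 2 * \<beta> + \<beta>^2) / (N3 * (1 - \<beta>)^2) * x"
      by (simp add: mu_def mu2_def N3_def)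
    hence "mu = (W2s + N2 * x) / (N2 * N3) - x^2" using alg by simp
    thus ?thesis using N2_pos by (simp add: add_divide_distrib field_simps power2_eq_square)
  qed
  ultimately show ?thesis by simp
qed

lemma Af_bd: "\<bar>A k f\<bar> \<le> Bf"
proof -
  have "\<bar>A k f\<bar> \<le> A k (\<lambda>t. Bf)" by (rule Aop_abs[OF c n si_f si_1]) (rule Bf)
  thus ?thesis unfolding A1 .
qed

lemma S3: "summable (\<lambda>v. w v * A v f)"
proof (rule summable_comparison_test'[where g="\<lambda>v. Bf * w v"])
  show "summable (\<lambda>v. Bf * w v)" using S0 by (intro summable_mult) (auto simp: sums_iff)
  fix v :: nat
  have "\<bar>w v * A v f\<bar> = w v * \<bar>A v f\<bar>" using w_nonneg by (simp add: abs_mult)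
  also have "\<dots> \<le> w v * Bf" using Af_bd w_nonneg by (intro mult_left_mono) auto
  finally show "norm (w v * A v f) \<le> Bf * w v" by (simp add: mult.commute)
qed

lemma S4: "(\<lambda>v. w v * E v) sums ((\<Sum>v. w v * A v f) - f x * (1 - exp (- u)) - S.gg1 x * (x - x * (1 - exp (- u))))"
proof -
  have "(\<lambda>v. w v * A v f - f x * w v - S.gg1 x * (w v * A v (\<lambda>t. t) - x * w v))
      sums ((\<Sum>v. w v * A v f) - f x * (1 - exp (- u)) - S.gg1 x * (x - x * (1 - exp (- u))))"
    by (intro sums_diff sums_mult summable_sums S3 S0 S1)
  moreover have "w v * A v f - f x * w v - S.gg1 x * (w v * A v (\<lambda>t. t) - x * w v) = w v * E v" for v
    by (simp add: E_def algebra_simps)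
  ultimately show ?thesis by simp
qed

lemma D_eq: "D_op n c \<beta> f x = (\<Sum>v. w v * A v f) + exp (- u) * f 0"
proof -
  define L where "L v = (LINT t:{0..}|lborel. p_basis n v c t * f t)" for v
  have q: "(real n - c) / c \<noteq> 0" using n c by simp
  have AL: "A v f = (real n - c) / c * L v" for v by (simp add: Aop_def L_def)
  have eq: "(\<lambda>v. w v * L v) = (\<lambda>v. (c / (real n - c)) * (w v * A v f))"
    using q by (intro ext) (simp add: AL field_simps)
  have sm: "summable (\<lambda>v. w v * L v)" unfolding eq by (intro summable_mult S3)
  have "(\<Sum>v. w v * A v f) = (real n - c) / c * (\<Sum>v. w v * L v)"
    unfolding AL using suminf_mult[OF sm, of "(real n - c) / c"] by (simp add: mult_ac)
  thus ?thesis unfolding D_op_def w_def[symmetric] L_def[symmetric] u_def[symmetric] by simp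
qed

lemma main_bound: "\<bar>D_op n c \<beta> f x - f x\<bar> \<le> 7 * W"
proof -
  define E0 where "E0 = f 0 - f x - S.gg1 x * (0 - x)"
  have sE: "(\<lambda>v. w v * E v) sums ((\<Sum>v. w v * A v f) - f x * (1 - exp (- u)) - S.gg1 x * (x - x * (1 - exp (- u))))"
    by (rule S4)
  have key: "D_op n c \<beta> f x - f x = (\<Sum>v. w v * E v) + exp (- u) * E0"
    unfolding D_eq sums_unique[OF sE, symmetric] E0_def by (simp add: algebra_simps)
  have bE0: "\<bar>E0\<bar> \<le> 2 * W + K * x^2"
  proof -
    have t1: "\<bar>S.gg 0 - S.gg x - S.gg1 x * (0 - x)\<bar> \<le> K * (0 - x)^2"
      using S.taylor_bound[of x 0] x by (simp add: K_def)
    have t2: "\<bar>f 0 - S.gg 0\<bar> \<le> W" using fmg_bd[of 0] by simp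
    have t3: "\<bar>f x - S.gg x\<bar> \<le> W" using fmg_bd[of x] x by simp
    have "E0 = (f 0 - S.gg 0) + (S.gg 0 - S.gg x - S.gg1 x * (0 - x)) - (f x - S.gg x)"
      by (simp add: E0_def)
    thus ?thesis using t1 t2 t3 by (simp add: abs_le_iff)
  qed
  have sB: "(\<lambda>v. w v * (2 * W + K * A v (\<lambda>t. (t - x)^2))) sums (2 * W * (1 - exp (- u)) + K * (mu - exp (- u) * x^2))"
  proof -
    have "(\<lambda>v. 2 * W * w v + K * (w v * A v (\<lambda>t. (t - x)^2))) sums (2 * W * (1 - exp (- u)) + K * (mu - exp (- u) * x^2))"
      by (intro sums_add sums_mult S0 S2)
    thus ?thesis by (simp add: algebra_simps)
  qed
  have le1: "\<bar>w v * E v\<bar> \<le> w v * (2 * W + K * A v (\<lambda>t. (t - x)^2))" for v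
    using E_bound[of v] w_nonneg[of v] by (simp add: abs_mult mult_left_mono)
  have sumE: "\<bar>\<Sum>v. w v * E v\<bar> \<le> 2 * W * (1 - exp (- u)) + K * (mu - exp (- u) * x^2)"
  proof -
    have "(\<Sum>v. w v * E v) \<le> (\<Sum>v. w v * (2 * W + K * A v (\<lambda>t. (t - x)^2)))"
      using le1 by (intro suminf_le) (use sE sB in \<open>auto simp: sums_iff abs_le_iff\<close>)
    moreover have "- (\<Sum>v. w v * E v) \<le> (\<Sum>v. w v * (2 * W + K * A v (\<lambda>t. (t - x)^2)))"
    proof -
      have "(\<Sum>v. - (w v * E v)) \<le> (\<Sum>v. w v * (2 * W + K * A v (\<lambda>t. (t - x)^2)))"
        using le1 by (intro suminf_le) (use sE sB in \<open>auto simp: sums_iff abs_le_iff summable_minus\<close>)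
      thus ?thesis using sE by (simp add: suminf_minus sums_iff)
    qed
    ultimately show ?thesis using sB by (simp add: sums_iff abs_le_iff)
  qed
  have e0: "0 \<le> exp (- u)" by simp
  have "\<bar>D_op n c \<beta> f x - f x\<bar> \<le> \<bar>\<Sum>v. w v * E v\<bar> + exp (- u) * \<bar>E0\<bar>"
    unfolding key using abs_triangle_ineq[of "\<Sum>v. w v * E v" "exp (- u) * E0"] by (simp add: abs_mult)
  also have "\<dots> \<le> (2 * W * (1 - exp (- u)) + K * (mu - exp (- u) * x^2)) + exp (- u) * (2 * W + K * x^2)"
    using sumE bE0 e0 by (intro add_mono mult_left_mono) auto
  also have "\<dots> = 2 * W + K * mu" by (simp add: algebra_simps)
  also have "\<dots> = 2 * W + 9 / 2 * W" using K_mu by simp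
  also have "\<dots> \<le> 7 * W" using W_facts(1) by simp
  finally show ?thesis .
qed
end


theorem theorem7:
  fixes c :: real
  assumes "c > 0"
  shows "\<exists>C1 > 0. \<forall>(f :: real \<Rightarrow> real) \<beta> (n :: nat) x.
           continuous_on {0..} f \<and> bounded (f ` {0..}) \<and> 0 < \<beta> \<and> \<beta> < 1
           \<and> real n > 3 * c \<and> 0 \<le> x \<longrightarrow>
           \<bar>D_op n c \<beta> f x - f x\<bar> \<le> C1 * omega2 f (sqrt (mu2 n c \<beta> x))"
proof (intro exI[of _ 7] conjI allI impI)
  show "(0::real) < 7" by simp
  fix f :: "real \<Rightarrow> real" and \<beta> :: real and n :: nat and x :: real
  assume h: "continuous_on {0..} f \<and> bounded (f ` {0..}) \<and> 0 < \<beta> \<and> \<beta> < 1 \<and> real n > 3 * c \<and> 0 \<le> x"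
  show "\<bar>D_op n c \<beta> f x - f x\<bar> \<le> 7 * omega2 f (sqrt (mu2 n c \<beta> x))"
  proof (cases "x = 0")
    case True
    have "D_op n c \<beta> f x = f x"
      unfolding D_op_def True r_n_def omega_beta_def by simp
    thus ?thesis using omega2_facts(1)[of f] h by simp
  next
    case False
    hence x: "0 < x" using h by simp
    interpret M: main_ctx c \<beta> n x f using h x assms by unfold_locales auto
    show ?thesis using M.main_bound unfolding M.W_def M.\<delta>_def M.mu_def .
  qed
qed

end
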